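(* Let $\mathsf V$ be a pseudovariety of semigroups. The following are equivalent: (1) $\mathsf V$ is concatenation-closed; (2) for every alphabet $A$ (possibly infinite), if $K,L\subseteq A^+$ are $\mathsf V$-recognizable, then so is $KL$; (3) $\mathsf V\supseteq\mathsf N$ and the multiplication in $\overline{\Omega}_A\mathsf V$ is open for every alphabet $A$; (4) $\mathsf V\supseteq\mathsf N$ and the multiplication in $\overline{\Omega}_A\mathsf V$ is open for every finite alphabet $A$.
   Context: A pseudovariety of semigroups is a class of finite semigroups closed under subsemigroups, homomorphic images and finite direct products; $\mathsf N$ is the pseudovariety of finite nilpotent semigroups. For an alphabet (set) $A$, $A^+$ is the free semigroup and $\overline{\Omega}_A\mathsf V$ the free pro-$\mathsf V$ semigroup over $A$ (a compact semigroup that is an inverse limit of members of $\mathsf V$, with a map from $A$ such that every map from $A$ to a pro-$\mathsf V$ semigroup extends uniquely to a continuous homomorphism). A language $L\subseteq A^+$ is $\mathsf V$-recognizable if $L=\varphi^{-1}(\varphi(L))$ for some homomorphism $\varphi\colon A^+\to F$ with $F\in\mathsf V$. $\mathsf V$ is concatenation-closed if, for every finite alphabet $A$, the $\mathsf V$-recognizable languages over $A$ are closed under concatenation. Multiplication is open if it maps open subsets of $\overline{\Omega}_A\mathsf V\times\overline{\Omega}_A\mathsf V$ to open sets. *)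

theory Defs
  imports "HOL-Analysis.Analysis"
begin

definition sgrp :: "'b set \<Rightarrow> ('b \<Rightarrow> 'b \<Rightarrow> 'b) \<Rightarrow> bool" where
  "sgrp S m \<longleftrightarrow> S \<noteq> {} \<and> (\<forall>x\<in>S. \<forall>y\<in>S. m x y \<in> S) \<and>
     (\<forall>x\<in>S. \<forall>y\<in>S. \<forall>z\<in>S. m (m x y) z = m x (m y z))"

definition finite_sgrp :: "'b set \<Rightarrow> ('b \<Rightarrow> 'b \<Rightarrow> 'b) \<Rightarrow> bool" where
  "finite_sgrp S m \<longleftrightarrow> finite S \<and> sgrp S m"

definition shom :: "'b set \<Rightarrow> ('b \<Rightarrow> 'b \<Rightarrow> 'b) \<Rightarrow> 'c set \<Rightarrow> ('c \<Rightarrow> 'c \<Rightarrow> 'c) \<Rightarrow> ('b \<Rightarrow> 'c) \<Rightarrow> bool" where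
  "shom S m T n h \<longleftrightarrow> (\<forall>x\<in>S. h x \<in> T) \<and> (\<forall>x\<in>S. \<forall>y\<in>S. h (m x y) = n (h x) (h y))"

definition prod_mult :: "('b \<Rightarrow> 'b \<Rightarrow> 'b) \<Rightarrow> ('c \<Rightarrow> 'c \<Rightarrow> 'c) \<Rightarrow> 'b \<times> 'c \<Rightarrow> 'b \<times> 'c \<Rightarrow> 'b \<times> 'c" where
  "prod_mult m n p q = (m (fst p) (fst q), n (snd p) (snd q))"

text \<open>A pseudovariety: a (nonempty) class of finite semigroups, every finite semigroup being
  represented up to isomorphism by one whose carrier is a set of natural numbers; closed under
  subsemigroups, homomorphic images and (binary, hence finite) direct products (up to isomorphism).\<close>

definition pseudovariety :: "(nat set \<times> (nat \<Rightarrow> nat \<Rightarrow> nat)) set \<Rightarrow> bool" where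
  "pseudovariety V \<longleftrightarrow> V \<noteq> {} \<and>
    (\<forall>S m. (S, m) \<in> V \<longrightarrow> finite_sgrp S m) \<and>
    (\<forall>S m T. (S, m) \<in> V \<and> T \<subseteq> S \<and> T \<noteq> {} \<and> (\<forall>x\<in>T. \<forall>y\<in>T. m x y \<in> T) \<longrightarrow> (T, m) \<in> V) \<and>
    (\<forall>S m T n h. (S, m) \<in> V \<and> finite_sgrp T n \<and> shom S m T n h \<and> h ` S = T \<longrightarrow> (T, n) \<in> V) \<and>
    (\<forall>S1 m1 S2 m2 T n h. (S1, m1) \<in> V \<and> (S2, m2) \<in> V \<and> finite_sgrp T n \<and>
        shom (S1 \<times> S2) (prod_mult m1 m2) T n h \<and> bij_betw h (S1 \<times> S2) T \<longrightarrow> (T, n) \<in> V)"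

text \<open>Finite nilpotent semigroups: there are z and n \<ge> 1 with every product of n elements equal to z
  (so z is a zero and S^n = {z}).\<close>

definition nilpotent_sgrp :: "'b set \<Rightarrow> ('b \<Rightarrow> 'b \<Rightarrow> 'b) \<Rightarrow> bool" where
  "nilpotent_sgrp S m \<longleftrightarrow> (\<exists>z\<in>S. \<exists>n::nat. n \<ge> 1 \<and>
     (\<forall>xs. length xs = n \<and> set xs \<subseteq> S \<longrightarrow> foldl m (hd xs) (tl xs) = z))"

definition contains_N :: "(nat set \<times> (nat \<Rightarrow> nat \<Rightarrow> nat)) set \<Rightarrow> bool" where
  "contains_N V \<longleftrightarrow> (\<forall>S m. finite_sgrp S m \<and> nilpotent_sgrp S m \<longrightarrow> (S, m) \<in> V)"

definition Aplus :: "'a set \<Rightarrow> 'a list set" where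
  "Aplus A = {w. w \<noteq> [] \<and> set w \<subseteq> A}"

definition recognizable :: "(nat set \<times> (nat \<Rightarrow> nat \<Rightarrow> nat)) set \<Rightarrow> 'a set \<Rightarrow> 'a list set \<Rightarrow> bool" where
  "recognizable V A L \<longleftrightarrow> L \<subseteq> Aplus A \<and>
     (\<exists>F m \<phi>. (F, m) \<in> V \<and> shom (Aplus A) (@) F m \<phi> \<and> L = {w \<in> Aplus A. \<phi> w \<in> \<phi> ` L})"

definition conc :: "'a list set \<Rightarrow> 'a list set \<Rightarrow> 'a list set" where
  "conc K L = {u @ v | u v. u \<in> K \<and> v \<in> L}"

definition conc_closed_on :: "(nat set \<times> (nat \<Rightarrow> nat \<Rightarrow> nat)) set \<Rightarrow> 'a set \<Rightarrow> bool" where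
  "conc_closed_on V A \<longleftrightarrow>
     (\<forall>K L. recognizable V A K \<and> recognizable V A L \<longrightarrow> recognizable V A (conc K L))"

section \<open>The free pro-V semigroup over A, as the inverse limit of the quotients A^+/\<theta> in V\<close>

text \<open>Congruences \<theta> on A^+ with A^+/\<theta> in V: kernels of surjective homomorphisms onto members of V.\<close>

definition V_congs :: "(nat set \<times> (nat \<Rightarrow> nat \<Rightarrow> nat)) set \<Rightarrow> 'a set \<Rightarrow> 'a list rel set" where
  "V_congs V A = {\<theta>. \<exists>F m \<phi>. (F, m) \<in> V \<and> shom (Aplus A) (@) F m \<phi> \<and> \<phi> ` Aplus A = F \<and>
       \<theta> = {(u, v). u \<in> Aplus A \<and> v \<in> Aplus A \<and> \<phi> u = \<phi> v}}"

text \<open>Elements: compatible families of classes (x \<theta> \<in> A^+/\<theta>, and x \<theta> \<subseteq> x \<theta>' when \<theta> \<subseteq> \<theta>').\<close>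

definition Omega :: "(nat set \<times> (nat \<Rightarrow> nat \<Rightarrow> nat)) set \<Rightarrow> 'a set \<Rightarrow> ('a list rel \<Rightarrow> 'a list set) set" where
  "Omega V A = {x. (\<forall>\<theta>. \<theta> \<notin> V_congs V A \<longrightarrow> x \<theta> = {}) \<and>
      (\<forall>\<theta>\<in>V_congs V A. x \<theta> \<in> Aplus A // \<theta>) \<and>
      (\<forall>\<theta>\<in>V_congs V A. \<forall>\<theta>'\<in>V_congs V A. \<theta> \<subseteq> \<theta>' \<longrightarrow> x \<theta> \<subseteq> x \<theta>')}"

definition Omega_mult :: "(nat set \<times> (nat \<Rightarrow> nat \<Rightarrow> nat)) set \<Rightarrow> 'a set \<Rightarrow>
    ('a list rel \<Rightarrow> 'a list set) \<Rightarrow> ('a list rel \<Rightarrow> 'a list set) \<Rightarrow> ('a list rel \<Rightarrow> 'a list set)" where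
  "Omega_mult V A x y = (\<lambda>\<theta>. if \<theta> \<in> V_congs V A
      then {w. \<exists>u\<in>x \<theta>. \<exists>v\<in>y \<theta>. (u @ v, w) \<in> \<theta>} else {})"

definition Omega_top :: "(nat set \<times> (nat \<Rightarrow> nat \<Rightarrow> nat)) set \<Rightarrow> 'a set \<Rightarrow> ('a list rel \<Rightarrow> 'a list set) topology" where
  "Omega_top V A = subtopology
     (product_topology (\<lambda>\<theta>. if \<theta> \<in> V_congs V A then discrete_topology (Aplus A // \<theta>)
                             else discrete_topology {{}}) UNIV)
     (Omega V A)"

definition mult_open :: "(nat set \<times> (nat \<Rightarrow> nat \<Rightarrow> nat)) set \<Rightarrow> 'a set \<Rightarrow> bool" where
  "mult_open V A \<longleftrightarrow> (\<forall>U. openin (prod_topology (Omega_top V A) (Omega_top V A)) U \<longrightarrow>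
      openin (Omega_top V A) ((\<lambda>(x, y). Omega_mult V A x y) ` U))"

end

theory Submission
  imports Defs
begin


lemma pvD:
  assumes "pseudovariety V"
  shows pv_ne: "V \<noteq> {}"
    and pv_fin: "\<And>S m. (S, m) \<in> V \<Longrightarrow> finite_sgrp S m"
    and pv_sub: "\<And>S m T. (S, m) \<in> V \<Longrightarrow> T \<subseteq> S \<Longrightarrow> T \<noteq> {} \<Longrightarrow> (\<forall>x\<in>T. \<forall>y\<in>T. m x y \<in> T) \<Longrightarrow> (T, m) \<in> V"
    and pv_hom: "\<And>S m T n h. (S, m) \<in> V \<Longrightarrow> finite_sgrp T n \<Longrightarrow> shom S m T n h \<Longrightarrow> h ` S = T \<Longrightarrow> (T, n) \<in> V"
    and pv_prod: "\<And>S1 m1 S2 m2 T n h. (S1, m1) \<in> V \<Longrightarrow> (S2, m2) \<in> V \<Longrightarrow> finite_sgrp T n \<Longrightarrow>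
        shom (S1 \<times> S2) (prod_mult m1 m2) T n h \<Longrightarrow> bij_betw h (S1 \<times> S2) T \<Longrightarrow> (T, n) \<in> V"
  using assms unfolding pseudovariety_def by blast+

lemma triv_in_V:
  assumes pv: "pseudovariety V"
  shows "({0::nat}, (\<lambda>_ _. 0)) \<in> V"
proof -
  from pv_ne[OF pv] obtain S m where Sm: "(S, m) \<in> V" by auto
  have fs: "finite_sgrp S m" using pv_fin[OF pv Sm] .
  then have "S \<noteq> {}" unfolding finite_sgrp_def sgrp_def by auto
  then have im: "(\<lambda>_. 0::nat) ` S = {0}" by auto
  have "finite_sgrp {0::nat} (\<lambda>_ _. 0)" unfolding finite_sgrp_def sgrp_def by auto
  moreover have "shom S m {0::nat} (\<lambda>_ _. 0) (\<lambda>_. 0)" unfolding shom_def by auto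
  ultimately show ?thesis using pv_hom[OF pv Sm] im by blast
qed

lemma transport:
  fixes S :: "'b set" and m :: "'b \<Rightarrow> 'b \<Rightarrow> 'b"
  assumes "finite_sgrp S m"
  obtains T :: "nat set" and n e where "finite_sgrp T n" "inj_on e S" "e ` S = T" "shom S m T n e"
proof -
  from assms have fin: "finite S" and sg: "sgrp S m" unfolding finite_sgrp_def by auto
  obtain e :: "'b \<Rightarrow> nat" and k where e: "e ` S = {i. i < k}" "inj_on e S"
    using finite_imp_inj_to_nat_seg[OF fin] by blast
  define n where "n i j = e (m (inv_into S e i) (inv_into S e j))" for i j
  have hom: "n (e x) (e y) = e (m x y)" if "x \<in> S" "y \<in> S" for x y
    using that e(2) unfolding n_def by (simp add: inv_into_f_f)
  have sh: "shom S m (e ` S) n e" unfolding shom_def using hom sg unfolding sgrp_def by auto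
  have "sgrp (e ` S) n"
    unfolding sgrp_def
  proof (intro conjI ballI)
    show "e ` S \<noteq> {}" using sg unfolding sgrp_def by auto
  next
    fix x y assume "x \<in> e ` S" "y \<in> e ` S"
    then obtain a b where "a \<in> S" "b \<in> S" "x = e a" "y = e b" by auto
    then show "n x y \<in> e ` S" using hom sg unfolding sgrp_def by auto
  next
    fix x y z assume "x \<in> e ` S" "y \<in> e ` S" "z \<in> e ` S"
    then obtain a b c where abc: "a \<in> S" "b \<in> S" "c \<in> S" "x = e a" "y = e b" "z = e c" by auto
    have c1: "m a b \<in> S" "m b c \<in> S" using abc sg unfolding sgrp_def by auto
    have "n (n x y) z = e (m (m a b) c)" using abc hom c1 by simp
    also have "\<dots> = e (m a (m b c))" using abc sg unfolding sgrp_def by auto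
    also have "\<dots> = n x (n y z)" using abc hom c1 by simp
    finally show "n (n x y) z = n x (n y z)" .
  qed
  then have "finite_sgrp (e ` S) n" using fin unfolding finite_sgrp_def by auto
  then show ?thesis using that[of "e ` S" n e] e(2) sh by auto
qed

lemma Aplus_app: "u \<in> Aplus A \<Longrightarrow> v \<in> Aplus A \<Longrightarrow> u @ v \<in> Aplus A"
  unfolding Aplus_def by auto

definition kerA :: "'a set \<Rightarrow> ('a list \<Rightarrow> 'c) \<Rightarrow> 'a list rel" where
  "kerA A \<phi> = {(u, v). u \<in> Aplus A \<and> v \<in> Aplus A \<and> \<phi> u = \<phi> v}"

lemma ker_in_Vcongs:
  assumes pv: "pseudovariety V" and A: "A \<noteq> {}" and F: "(F, m) \<in> V"
    and h: "shom (Aplus A) (@) F m \<phi>"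
  shows "kerA A \<phi> \<in> V_congs V A"
proof -
  have sub: "\<phi> ` Aplus A \<subseteq> F" using h unfolding shom_def by auto
  obtain a where "a \<in> A" using A by auto
  then have "[a] \<in> Aplus A" unfolding Aplus_def by auto
  then have ne: "\<phi> ` Aplus A \<noteq> {}" by auto
  have cl: "\<forall>x\<in>\<phi> ` Aplus A. \<forall>y\<in>\<phi> ` Aplus A. m x y \<in> \<phi> ` Aplus A"
  proof (intro ballI)
    fix x y assume "x \<in> \<phi> ` Aplus A" "y \<in> \<phi> ` Aplus A"
    then obtain u v where "u \<in> Aplus A" "v \<in> Aplus A" "x = \<phi> u" "y = \<phi> v" by auto
    then show "m x y \<in> \<phi> ` Aplus A" using h Aplus_app unfolding shom_def
      by (metis image_eqI)
  qed
  have "(\<phi> ` Aplus A, m) \<in> V" using pv_sub[OF pv F sub ne cl] .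
  moreover have "shom (Aplus A) (@) (\<phi> ` Aplus A) m \<phi>" using h unfolding shom_def by auto
  ultimately show ?thesis unfolding V_congs_def kerA_def by (intro CollectI exI conjI) auto
qed

lemma Vcongs_E:
  assumes "\<theta> \<in> V_congs V A"
  obtains F m \<phi> where "(F, m) \<in> V" "shom (Aplus A) (@) F m \<phi>" "\<phi> ` Aplus A = F" "\<theta> = kerA A \<phi>"
  using assms unfolding V_congs_def kerA_def by blast

lemma Vcongs_nonempty_A:
  assumes pv: "pseudovariety V" and "\<theta> \<in> V_congs V A" shows "A \<noteq> {}"
proof
  assume "A = {}"
  then have "Aplus A = {}" unfolding Aplus_def by auto
  from assms(2) obtain F m \<phi> where "(F, m) \<in> V" "\<phi> ` Aplus A = F" by (rule Vcongs_E)
  then show False using pv_fin[OF pv] \<open>Aplus A = {}\<close> unfolding finite_sgrp_def sgrp_def by auto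
qed

lemma univ_in_Vcongs:
  assumes pv: "pseudovariety V" and A: "A \<noteq> {}"
  shows "Aplus A \<times> Aplus A \<in> V_congs V A"
proof -
  have "kerA A (\<lambda>_. 0::nat) \<in> V_congs V A"
    by (rule ker_in_Vcongs[OF pv A triv_in_V[OF pv]]) (auto simp: shom_def)
  moreover have "kerA A (\<lambda>_. 0::nat) = Aplus A \<times> Aplus A" unfolding kerA_def by auto
  ultimately show ?thesis by simp
qed

lemma Vcongs_Int:
  assumes pv: "pseudovariety V" and t1: "\<theta>1 \<in> V_congs V A" and t2: "\<theta>2 \<in> V_congs V A"
  shows "\<theta>1 \<inter> \<theta>2 \<in> V_congs V A"
proof -
  have A: "A \<noteq> {}" using Vcongs_nonempty_A[OF pv t1] .
  obtain F1 m1 \<phi>1 where 1: "(F1, m1) \<in> V" "shom (Aplus A) (@) F1 m1 \<phi>1" "\<theta>1 = kerA A \<phi>1"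
    using t1 by (rule Vcongs_E) auto
  obtain F2 m2 \<phi>2 where 2: "(F2, m2) \<in> V" "shom (Aplus A) (@) F2 m2 \<phi>2" "\<theta>2 = kerA A \<phi>2"
    using t2 by (rule Vcongs_E) auto
  have f1: "finite_sgrp F1 m1" and f2: "finite_sgrp F2 m2" using pv_fin[OF pv] 1 2 by auto
  have fp: "finite_sgrp (F1 \<times> F2) (prod_mult m1 m2)"
    using f1 f2 unfolding finite_sgrp_def sgrp_def prod_mult_def by auto
  obtain T :: "nat set" and n e where T: "finite_sgrp T n" "inj_on e (F1 \<times> F2)" "e ` (F1 \<times> F2) = T"
     "shom (F1 \<times> F2) (prod_mult m1 m2) T n e"
    using transport[OF fp] by blast
  have "bij_betw e (F1 \<times> F2) T" using T unfolding bij_betw_def by auto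
  then have TV: "(T, n) \<in> V" using pv_prod[OF pv 1(1) 2(1) T(1) T(4)] by blast
  define \<phi> where "\<phi> w = e (\<phi>1 w, \<phi>2 w)" for w
  have sh: "shom (Aplus A) (@) T n \<phi>"
    unfolding shom_def
  proof (intro conjI ballI)
    fix x assume "x \<in> Aplus A"
    then show "\<phi> x \<in> T" using 1 2 T(3) unfolding shom_def \<phi>_def by auto
  next
    fix x y assume xy: "x \<in> Aplus A" "y \<in> Aplus A"
    then have "(\<phi>1 x, \<phi>2 x) \<in> F1 \<times> F2" "(\<phi>1 y, \<phi>2 y) \<in> F1 \<times> F2" using 1 2 unfolding shom_def by auto
    then have "n (\<phi> x) (\<phi> y) = e (prod_mult m1 m2 (\<phi>1 x, \<phi>2 x) (\<phi>1 y, \<phi>2 y))"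
      using T(4) unfolding shom_def \<phi>_def by metis
    also have "\<dots> = \<phi> (x @ y)" using xy 1 2 unfolding shom_def \<phi>_def prod_mult_def by auto
    finally show "\<phi> (x @ y) = n (\<phi> x) (\<phi> y)" by simp
  qed
  have "kerA A \<phi> = \<theta>1 \<inter> \<theta>2"
  proof -
    have "\<phi> u = \<phi> v \<longleftrightarrow> \<phi>1 u = \<phi>1 v \<and> \<phi>2 u = \<phi>2 v" if "u \<in> Aplus A" "v \<in> Aplus A" for u v
    proof -
      have "(\<phi>1 u, \<phi>2 u) \<in> F1 \<times> F2" "(\<phi>1 v, \<phi>2 v) \<in> F1 \<times> F2" using that 1 2 unfolding shom_def by auto
      then show ?thesis using T(2) unfolding \<phi>_def inj_on_def by auto
    qed
    then show ?thesis unfolding kerA_def 1 2 by auto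
  qed
  then show ?thesis using ker_in_Vcongs[OF pv A TV sh] by simp
qed

lemma Vcongs_Inter:
  assumes pv: "pseudovariety V" and "finite \<Theta>" "\<Theta> \<subseteq> V_congs V A" "\<theta> \<in> V_congs V A"
  shows "\<theta> \<inter> \<Inter>\<Theta> \<in> V_congs V A"
  using assms(2-4)
proof (induction \<Theta> rule: finite_induct)
  case empty then show ?case by simp
next
  case (insert t \<Theta>)
  then have "\<theta> \<inter> \<Inter>\<Theta> \<in> V_congs V A" by auto
  then have "(\<theta> \<inter> \<Inter>\<Theta>) \<inter> t \<in> V_congs V A" using Vcongs_Int[OF pv] insert by auto
  then show ?case by (simp add: Int_ac)
qed

lemma Vcongs_props:
  assumes "\<theta> \<in> V_congs V A"
  shows "\<theta> \<subseteq> Aplus A \<times> Aplus A" "equiv (Aplus A) \<theta>"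
    "\<And>u u' v v'. (u, u') \<in> \<theta> \<Longrightarrow> (v, v') \<in> \<theta> \<Longrightarrow> (u @ v, u' @ v') \<in> \<theta>"
proof -
  obtain F m \<phi> where 1: "(F, m) \<in> V" "shom (Aplus A) (@) F m \<phi>" "\<theta> = kerA A \<phi>"
    using assms by (rule Vcongs_E) auto
  show "\<theta> \<subseteq> Aplus A \<times> Aplus A" using 1 unfolding kerA_def by auto
  show "equiv (Aplus A) \<theta>" using 1 unfolding kerA_def equiv_def refl_on_def sym_def trans_def by auto
  show "(u @ v, u' @ v') \<in> \<theta>" if "(u, u') \<in> \<theta>" "(v, v') \<in> \<theta>" for u u' v v'
  proof -
    have a: "u \<in> Aplus A" "u' \<in> Aplus A" "v \<in> Aplus A" "v' \<in> Aplus A" "\<phi> u = \<phi> u'" "\<phi> v = \<phi> v'"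
      using that 1(3) unfolding kerA_def by auto
    have "\<phi> (u @ v) = \<phi> (u' @ v')" using a 1(2) unfolding shom_def by simp
    then show ?thesis using a Aplus_app 1(3) unfolding kerA_def by auto
  qed
qed

lemma Vcongs_finite:
  assumes pv: "pseudovariety V" and "\<theta> \<in> V_congs V A"
  shows "finite (Aplus A // \<theta>)"
proof -
  obtain F m \<phi> where 1: "(F, m) \<in> V" "shom (Aplus A) (@) F m \<phi>" "\<theta> = kerA A \<phi>"
    using assms(2) by (rule Vcongs_E) auto
  have "finite F" using pv_fin[OF pv 1(1)] unfolding finite_sgrp_def by auto
  moreover have "Aplus A // \<theta> \<subseteq> (\<lambda>f. {w \<in> Aplus A. \<phi> w = f}) ` F"
  proof
    fix c assume "c \<in> Aplus A // \<theta>"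
    then obtain u where u: "u \<in> Aplus A" "c = \<theta> `` {u}" unfolding quotient_def by auto
    then have "c = {w \<in> Aplus A. \<phi> w = \<phi> u}" using 1 unfolding kerA_def by auto
    moreover have "\<phi> u \<in> F" using u 1 unfolding shom_def by auto
    ultimately show "c \<in> (\<lambda>f. {w \<in> Aplus A. \<phi> w = f}) ` F" by auto
  qed
  ultimately show ?thesis by (meson finite_surj)
qed

lemma rec_iff:
  assumes pv: "pseudovariety V" and A: "A \<noteq> {}"
  shows "recognizable V A L \<longleftrightarrow> L \<subseteq> Aplus A \<and> (\<exists>\<theta>\<in>V_congs V A. \<forall>u v. (u, v) \<in> \<theta> \<longrightarrow> u \<in> L \<longrightarrow> v \<in> L)"
proof
  assume r: "recognizable V A L"
  then obtain F m \<phi> where 1: "(F, m) \<in> V" "shom (Aplus A) (@) F m \<phi>" "L = {w \<in> Aplus A. \<phi> w \<in> \<phi> ` L}"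
    unfolding recognizable_def by blast
  have "kerA A \<phi> \<in> V_congs V A" by (rule ker_in_Vcongs[OF pv A 1(1,2)])
  moreover have "\<forall>u v. (u, v) \<in> kerA A \<phi> \<longrightarrow> u \<in> L \<longrightarrow> v \<in> L"
  proof (intro allI impI)
    fix u v assume "(u, v) \<in> kerA A \<phi>" "u \<in> L"
    then have "v \<in> {w \<in> Aplus A. \<phi> w \<in> \<phi> ` L}" unfolding kerA_def by (auto intro: image_eqI[of _ _ u])
    then show "v \<in> L" using 1(3) by auto
  qed
  ultimately show "L \<subseteq> Aplus A \<and> (\<exists>\<theta>\<in>V_congs V A. \<forall>u v. (u, v) \<in> \<theta> \<longrightarrow> u \<in> L \<longrightarrow> v \<in> L)"
    using r unfolding recognizable_def by blast
next
  assume "L \<subseteq> Aplus A \<and> (\<exists>\<theta>\<in>V_congs V A. \<forall>u v. (u, v) \<in> \<theta> \<longrightarrow> u \<in> L \<longrightarrow> v \<in> L)"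
  then obtain \<theta> where L: "L \<subseteq> Aplus A" and t: "\<theta> \<in> V_congs V A" and sat: "\<forall>u v. (u, v) \<in> \<theta> \<longrightarrow> u \<in> L \<longrightarrow> v \<in> L"
    by blast
  obtain F m \<phi> where 1: "(F, m) \<in> V" "shom (Aplus A) (@) F m \<phi>" "\<theta> = kerA A \<phi>"
    using t by (rule Vcongs_E) auto
  have "L = {w \<in> Aplus A. \<phi> w \<in> \<phi> ` L}"
  proof (intro equalityI subsetI)
    fix w assume "w \<in> {w \<in> Aplus A. \<phi> w \<in> \<phi> ` L}"
    then obtain u where "u \<in> L" "w \<in> Aplus A" "\<phi> w = \<phi> u" by auto
    then have "(u, w) \<in> \<theta>" using L 1(3) unfolding kerA_def by auto
    then show "w \<in> L" using sat \<open>u \<in> L\<close> by blast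
  qed (use L in auto)
  then show "recognizable V A L" unfolding recognizable_def using 1 L by blast
qed



definition iota :: "(nat set \<times> (nat \<Rightarrow> nat \<Rightarrow> nat)) set \<Rightarrow> 'a set \<Rightarrow> 'a list \<Rightarrow> ('a list rel \<Rightarrow> 'a list set)" where
  "iota V A w = (\<lambda>\<theta>. if \<theta> \<in> V_congs V A then \<theta> `` {w} else {})"

definition Bset where "Bset V A \<theta> c = {x \<in> Omega V A. x \<theta> = c}"

lemma Omega_cls:
  assumes x: "x \<in> Omega V A" and t: "\<theta> \<in> V_congs V A"
  shows "x \<theta> \<in> Aplus A // \<theta>" "x \<theta> \<noteq> {}" "x \<theta> \<subseteq> Aplus A" "\<And>u. u \<in> x \<theta> \<Longrightarrow> x \<theta> = \<theta> `` {u}"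
proof -
  show q: "x \<theta> \<in> Aplus A // \<theta>" using x t unfolding Omega_def by auto
  have eq: "equiv (Aplus A) \<theta>" using Vcongs_props(2)[OF t] .
  show "x \<theta> \<noteq> {}" using in_quotient_imp_non_empty[OF eq q] .
  show "x \<theta> \<subseteq> Aplus A" using in_quotient_imp_subset[OF eq q] .
  show "x \<theta> = \<theta> `` {u}" if "u \<in> x \<theta>" for u
  proof -
    obtain w where w: "x \<theta> = \<theta> `` {w}" "w \<in> Aplus A" using q by (rule quotientE)
    then have "(w, u) \<in> \<theta>" using that by auto
    then show ?thesis using w eq by (simp add: equiv_class_eq)
  qed
qed

lemma Omega_refine:
  assumes x: "x \<in> Omega V A" and t: "\<theta> \<in> V_congs V A" "\<theta>' \<in> V_congs V A" "\<theta> \<subseteq> \<theta>'" and u: "u \<in> x \<theta>"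
  shows "x \<theta>' = \<theta>' `` {u}"
proof -
  have "x \<theta> \<subseteq> x \<theta>'" using x t unfolding Omega_def by auto
  then show ?thesis using Omega_cls(4)[OF x t(2)] u by auto
qed

lemma Omega_mono:
  assumes x: "x \<in> Omega V A" and t: "\<theta> \<in> V_congs V A" "\<theta>' \<in> V_congs V A" "\<theta> \<subseteq> \<theta>'"
  shows "x \<theta> \<subseteq> x \<theta>'"
  using x t unfolding Omega_def by auto

lemma Omega_agree:

  assumes x: "x \<in> Omega V A" and z: "z \<in> Omega V A" and t: "\<theta> \<in> V_congs V A" "\<theta>' \<in> V_congs V A" "\<theta> \<subseteq> \<theta>'"
    and e: "x \<theta> = z \<theta>"
  shows "x \<theta>' = z \<theta>'"
proof -
  obtain u where u: "u \<in> x \<theta>" using Omega_cls(2)[OF x t(1)] by auto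
  then have "u \<in> z \<theta>" using e by simp
  then show ?thesis using Omega_refine[OF x t u] Omega_refine[OF z t] by simp
qed

lemma Omega_nonC: "x \<in> Omega V A \<Longrightarrow> \<theta> \<notin> V_congs V A \<Longrightarrow> x \<theta> = {}"
  unfolding Omega_def by auto

lemma iota_Omega:
  assumes w: "w \<in> Aplus A"
  shows "iota V A w \<in> Omega V A"
  unfolding Omega_def iota_def
proof (intro CollectI conjI allI ballI impI)
  fix \<theta> assume "\<theta> \<in> V_congs V A"
  then show "(if \<theta> \<in> V_congs V A then \<theta> `` {w} else {}) \<in> Aplus A // \<theta>"
    using w by (simp add: quotientI)
next
  fix \<theta> \<theta>' assume "\<theta> \<in> V_congs V A" "\<theta>' \<in> V_congs V A" "\<theta> \<subseteq> \<theta>'"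
  then show "(if \<theta> \<in> V_congs V A then \<theta> `` {w} else {}) \<subseteq> (if \<theta>' \<in> V_congs V A then \<theta>' `` {w} else {})"
    by auto
qed auto

lemma iota_app: "\<theta> \<in> V_congs V A \<Longrightarrow> iota V A w \<theta> = \<theta> `` {w}"
  unfolding iota_def by simp

lemma iota_self: "\<theta> \<in> V_congs V A \<Longrightarrow> w \<in> Aplus A \<Longrightarrow> w \<in> iota V A w \<theta>"
  unfolding iota_app by (rule equiv_class_self[OF Vcongs_props(2)])

lemma mult_app:
  assumes x: "x \<in> Omega V A" and y: "y \<in> Omega V A" and t: "\<theta> \<in> V_congs V A"
    and u: "u \<in> x \<theta>" and v: "v \<in> y \<theta>"
  shows "Omega_mult V A x y \<theta> = \<theta> `` {u @ v}"
proof -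
  have eq: "equiv (Aplus A) \<theta>" using Vcongs_props(2)[OF t] .
  then have sy: "sym \<theta>" and tr: "trans \<theta>" unfolding equiv_def by auto
  have H: "(u' @ v', w) \<in> \<theta> \<longleftrightarrow> (u @ v, w) \<in> \<theta>" if "u' \<in> x \<theta>" "v' \<in> y \<theta>" for u' v' w
  proof -
    have "(u, u') \<in> \<theta>" using that Omega_cls(4)[OF x t u] by auto
    moreover have "(v, v') \<in> \<theta>" using that Omega_cls(4)[OF y t v] by auto
    ultimately have 1: "(u @ v, u' @ v') \<in> \<theta>" using Vcongs_props(3)[OF t] by blast
    then have 2: "(u' @ v', u @ v) \<in> \<theta>" using sy by (meson symD)
    show ?thesis
    proof
      assume "(u' @ v', w) \<in> \<theta>" then show "(u @ v, w) \<in> \<theta>" using 1 tr by (meson transD)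
    next
      assume "(u @ v, w) \<in> \<theta>" then show "(u' @ v', w) \<in> \<theta>" using 2 tr by (meson transD)
    qed
  qed
  show ?thesis
  proof (rule set_eqI)
    fix w
    have "w \<in> Omega_mult V A x y \<theta> \<longleftrightarrow> (\<exists>u'\<in>x \<theta>. \<exists>v'\<in>y \<theta>. (u' @ v', w) \<in> \<theta>)"
      unfolding Omega_mult_def using t by simp
    also have "\<dots> \<longleftrightarrow> (u @ v, w) \<in> \<theta>" using H u v by blast
    finally show "w \<in> Omega_mult V A x y \<theta> \<longleftrightarrow> w \<in> \<theta> `` {u @ v}" by simp
  qed
qed

lemma mult_Omega:
  assumes x: "x \<in> Omega V A" and y: "y \<in> Omega V A"
  shows "Omega_mult V A x y \<in> Omega V A"
proof -
  have 1: "Omega_mult V A x y \<theta> = {}" if "\<theta> \<notin> V_congs V A" for \<theta>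
    using that unfolding Omega_mult_def by simp
  have 2: "Omega_mult V A x y \<theta> \<in> Aplus A // \<theta>" if t: "\<theta> \<in> V_congs V A" for \<theta>
  proof -
    obtain u v where uv: "u \<in> x \<theta>" "v \<in> y \<theta>" using Omega_cls(2)[OF x t] Omega_cls(2)[OF y t] by blast
    have "u \<in> Aplus A" "v \<in> Aplus A" using uv Omega_cls(3)[OF x t] Omega_cls(3)[OF y t] by auto
    then have "u @ v \<in> Aplus A" by (rule Aplus_app)
    then have "\<theta> `` {u @ v} \<in> Aplus A // \<theta>" by (rule quotientI)
    then show ?thesis using mult_app[OF x y t uv] by simp
  qed
  have 3: "Omega_mult V A x y \<theta> \<subseteq> Omega_mult V A x y \<theta>'"
    if t: "\<theta> \<in> V_congs V A" "\<theta>' \<in> V_congs V A" "\<theta> \<subseteq> \<theta>'" for \<theta> \<theta>'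
  proof -
    obtain u v where uv: "u \<in> x \<theta>" "v \<in> y \<theta>" using Omega_cls(2)[OF x t(1)] Omega_cls(2)[OF y t(1)] by blast
    have "x \<theta> \<subseteq> x \<theta>'" "y \<theta> \<subseteq> y \<theta>'" using Omega_mono[OF x t] Omega_mono[OF y t] by auto
    then have uv': "u \<in> x \<theta>'" "v \<in> y \<theta>'" using uv by auto
    have "Omega_mult V A x y \<theta> = \<theta> `` {u @ v}" by (rule mult_app[OF x y t(1) uv])
    moreover have "Omega_mult V A x y \<theta>' = \<theta>' `` {u @ v}" by (rule mult_app[OF x y t(2) uv'])
    ultimately show ?thesis using t(3) by auto
  qed
  show ?thesis unfolding Omega_def by (intro CollectI conjI allI impI ballI 1 2 3)
qed

lemma iota_mult:
  assumes u: "u \<in> Aplus A" and v: "v \<in> Aplus A"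
  shows "Omega_mult V A (iota V A u) (iota V A v) = iota V A (u @ v)"
proof
  fix \<theta> show "Omega_mult V A (iota V A u) (iota V A v) \<theta> = iota V A (u @ v) \<theta>"
  proof (cases "\<theta> \<in> V_congs V A")
    case True
    then show ?thesis using mult_app[OF iota_Omega[OF u] iota_Omega[OF v] True iota_self[OF True u] iota_self[OF True v]]
      by (simp add: iota_app)
  qed (simp add: Omega_mult_def iota_def)
qed

section \<open>Topology\<close>

definition Xf :: "(nat set \<times> (nat \<Rightarrow> nat \<Rightarrow> nat)) set \<Rightarrow> 'a set \<Rightarrow> 'a list rel \<Rightarrow> 'a list set topology" where
  "Xf V A \<theta> = discrete_topology (if \<theta> \<in> V_congs V A then Aplus A // \<theta> else {{}})"

lemma Omega_top_alt: "Omega_top V A = subtopology (product_topology (Xf V A) UNIV) (Omega V A)"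
proof -
  have "(\<lambda>\<theta>. if \<theta> \<in> V_congs V A then discrete_topology (Aplus A // \<theta>) else discrete_topology {{}}) = Xf V A"
    unfolding Xf_def by (auto simp: fun_eq_iff)
  then show ?thesis unfolding Omega_top_def by simp
qed

lemma Omega_sub_top: "Omega V A \<subseteq> topspace (product_topology (Xf V A) UNIV)"
  unfolding Omega_def Xf_def by (auto simp: PiE_iff)

lemma topspace_Omega_top: "topspace (Omega_top V A) = Omega V A"
  unfolding Omega_top_alt using Omega_sub_top by auto

lemma proj_cont:
  assumes t: "\<theta> \<in> V_congs V A"
  shows "continuous_map (Omega_top V A) (discrete_topology (Aplus A // \<theta>)) (\<lambda>x. x \<theta>)"
proof -
  have "continuous_map (product_topology (Xf V A) UNIV) (Xf V A \<theta>) (\<lambda>x. x \<theta>)"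
    by (rule continuous_map_product_projection) simp
  then have "continuous_map (Omega_top V A) (Xf V A \<theta>) (\<lambda>x. x \<theta>)"
    unfolding Omega_top_alt by (rule continuous_map_from_subtopology)
  then show ?thesis using t unfolding Xf_def by simp
qed

lemma proj_clopen:
  assumes t: "\<theta> \<in> V_congs V A"
  shows "openin (Omega_top V A) {x \<in> Omega V A. x \<theta> \<in> D}" "closedin (Omega_top V A) {x \<in> Omega V A. x \<theta> \<in> D}"
proof -
  have e: "{x \<in> Omega V A. x \<theta> \<in> D} = {x \<in> topspace (Omega_top V A). x \<theta> \<in> D \<inter> (Aplus A // \<theta>)}"
    using Omega_cls(1)[OF _ t] topspace_Omega_top by auto
  show "openin (Omega_top V A) {x \<in> Omega V A. x \<theta> \<in> D}" unfolding e
    by (rule openin_continuous_map_preimage[OF proj_cont[OF t]]) auto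
  show "closedin (Omega_top V A) {x \<in> Omega V A. x \<theta> \<in> D}" unfolding e
    by (rule closedin_continuous_map_preimage[OF proj_cont[OF t]]) auto
qed

lemma Bset_clopen:
  assumes t: "\<theta> \<in> V_congs V A"
  shows "openin (Omega_top V A) (Bset V A \<theta> c)" "closedin (Omega_top V A) (Bset V A \<theta> c)"
  using proj_clopen[OF t, of "{c}"] unfolding Bset_def by auto

lemma open_char:
  assumes pv: "pseudovariety V" and A: "A \<noteq> {}"
  shows "openin (Omega_top V A) U \<longleftrightarrow> U \<subseteq> Omega V A \<and> (\<forall>z\<in>U. \<exists>\<theta>\<in>V_congs V A. Bset V A \<theta> (z \<theta>) \<subseteq> U)"
proof
  assume "U \<subseteq> Omega V A \<and> (\<forall>z\<in>U. \<exists>\<theta>\<in>V_congs V A. Bset V A \<theta> (z \<theta>) \<subseteq> U)"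
  then show "openin (Omega_top V A) U"
    by (subst openin_subopen) (metis (mono_tags, lifting) Bset_clopen(1) Bset_def mem_Collect_eq subsetD)
next
  assume o: "openin (Omega_top V A) U"
  then have sub: "U \<subseteq> Omega V A" using openin_subset topspace_Omega_top by metis
  from o obtain W where W: "openin (product_topology (Xf V A) UNIV) W" "U = W \<inter> Omega V A"
    unfolding Omega_top_alt openin_subtopology by auto
  have "\<exists>\<theta>\<in>V_congs V A. Bset V A \<theta> (z \<theta>) \<subseteq> U" if z: "z \<in> U" for z
  proof -
    obtain Ub where Ub: "finite {i \<in> UNIV. Ub i \<noteq> topspace (Xf V A i)}" "\<forall>i\<in>UNIV. openin (Xf V A i) (Ub i)"
      "z \<in> Pi\<^sub>E UNIV Ub" "Pi\<^sub>E UNIV Ub \<subseteq> W"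
      using W z unfolding openin_product_topology_alt by blast
    define J where "J = {i. Ub i \<noteq> topspace (Xf V A i)} \<inter> V_congs V A"
    have fJ: "finite J" using Ub(1) unfolding J_def by auto
    define \<theta> where "\<theta> = (Aplus A \<times> Aplus A) \<inter> \<Inter>J"
    have t: "\<theta> \<in> V_congs V A" unfolding \<theta>_def
      by (rule Vcongs_Inter[OF pv fJ _ univ_in_Vcongs[OF pv A]]) (auto simp: J_def)
    have zO: "z \<in> Omega V A" using z sub by auto
    have "x \<in> U" if x: "x \<in> Bset V A \<theta> (z \<theta>)" for x
    proof -
      have xO: "x \<in> Omega V A" and xz: "x \<theta> = z \<theta>" using x unfolding Bset_def by auto
      have "x i \<in> Ub i" for i
      proof (cases "i \<in> V_congs V A")
        case True
        show ?thesis
        proof (cases "i \<in> J")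
          case True
          then have "\<theta> \<subseteq> i" unfolding \<theta>_def by auto
          then have "x i = z i" using Omega_agree[OF xO zO t _ _ xz] \<open>i \<in> V_congs V A\<close> by auto
          then show ?thesis using Ub(3) by auto
        next
          case False
          then have "Ub i = Aplus A // i" using \<open>i \<in> V_congs V A\<close> unfolding J_def Xf_def by auto
          then show ?thesis using Omega_cls(1)[OF xO \<open>i \<in> V_congs V A\<close>] by simp
        qed
      next
        case False
        then have "x i = {}" "z i = {}" using Omega_nonC[OF xO] Omega_nonC[OF zO] by auto
        moreover have "z i \<in> Ub i" using Ub(3) by (auto simp: PiE_iff)
        ultimately show ?thesis by simp
      qed
      then have "x \<in> Pi\<^sub>E UNIV Ub" by auto
      then show "x \<in> U" using Ub(4) W(2) xO by auto
    qed
    then show ?thesis using t by blast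
  qed
  then show "U \<subseteq> Omega V A \<and> (\<forall>z\<in>U. \<exists>\<theta>\<in>V_congs V A. Bset V A \<theta> (z \<theta>) \<subseteq> U)" using sub by blast
qed

lemma Omega_closed:
  "closedin (product_topology (Xf V A) UNIV) (Omega V A)"
  unfolding closedin_def
proof (intro conjI Omega_sub_top)
  let ?P = "product_topology (Xf V A) UNIV"
  show "openin ?P (topspace ?P - Omega V A)"
  proof (subst openin_subopen, intro ballI)
    fix x assume x: "x \<in> topspace ?P - Omega V A"
    then have xt: "\<And>i. x i \<in> topspace (Xf V A i)" by auto
    have "\<exists>\<theta>\<in>V_congs V A. \<exists>\<theta>'\<in>V_congs V A. \<theta> \<subseteq> \<theta>' \<and> \<not> x \<theta> \<subseteq> x \<theta>'"
    proof (rule ccontr)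
      assume nt: "\<not> ?thesis" have "x i = {}" if "i \<notin> V_congs V A" for i using xt[of i] that unfolding Xf_def by auto
      moreover have "x i \<in> Aplus A // i" if "i \<in> V_congs V A" for i using xt[of i] that unfolding Xf_def by auto
      ultimately have "x \<in> Omega V A" using nt unfolding Omega_def by (intro CollectI conjI allI impI ballI) auto

      then show False using x by auto
    qed
    then obtain \<theta> \<theta>' where tt: "\<theta> \<in> V_congs V A" "\<theta>' \<in> V_congs V A" "\<theta> \<subseteq> \<theta>'" "\<not> x \<theta> \<subseteq> x \<theta>'" by blast
    define T where "T = {y \<in> topspace ?P. y \<theta> \<in> {x \<theta>}} \<inter> {y \<in> topspace ?P. y \<theta>' \<in> {x \<theta>'}}"
    have "openin ?P T" unfolding T_def
      by (intro openin_Int openin_continuous_map_preimage[OF continuous_map_product_projection]) (use xt in \<open>auto simp: Xf_def\<close>)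

    moreover have "x \<in> T" using x unfolding T_def by auto
    moreover have "T \<subseteq> topspace ?P - Omega V A"
    proof
      fix y assume "y \<in> T"
      then have "y \<in> topspace ?P" "y \<theta> = x \<theta>" "y \<theta>' = x \<theta>'" unfolding T_def by auto
      then show "y \<in> topspace ?P - Omega V A" using tt Omega_mono[of y V A \<theta> \<theta>'] by auto
    qed

    ultimately show "\<exists>T. openin ?P T \<and> x \<in> T \<and> T \<subseteq> topspace ?P - Omega V A" by blast
  qed
qed

lemma Omega_compact:
  assumes pv: "pseudovariety V"
  shows "compact_space (Omega_top V A)"
proof -
  let ?P = "product_topology (Xf V A) UNIV"
  have "compact_space (Xf V A i)" for i
    unfolding Xf_def compact_space_discrete_topology using Vcongs_finite[OF pv] by auto
  then have "compact_space ?P" unfolding compact_space_product_topology[of "Xf V A" UNIV] by blast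
  then have "compactin ?P (Omega V A)" using closedin_compact_space[OF _ Omega_closed] by blast
  then show ?thesis unfolding Omega_top_alt by (rule compact_space_subtopology)
qed

lemma Omega_Hausdorff: "Hausdorff_space (Omega_top V A)"
  unfolding Omega_top_alt
  by (intro Hausdorff_space_subtopology) (simp add: Hausdorff_space_product_topology Xf_def)

lemma mult_cont:
  assumes pv: "pseudovariety V" and A: "A \<noteq> {}"
  shows "continuous_map (prod_topology (Omega_top V A) (Omega_top V A)) (Omega_top V A) (\<lambda>(x, y). Omega_mult V A x y)"
  unfolding continuous_map_def
proof (intro conjI allI impI)
  show "(\<lambda>(x, y). Omega_mult V A x y) \<in> topspace (prod_topology (Omega_top V A) (Omega_top V A)) \<rightarrow> topspace (Omega_top V A)"
    using mult_Omega by (auto simp: topspace_Omega_top)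
next
  fix U assume U: "openin (Omega_top V A) U"
  let ?X = "prod_topology (Omega_top V A) (Omega_top V A)"
  show "openin ?X {p \<in> topspace ?X. (case p of (x, y) \<Rightarrow> Omega_mult V A x y) \<in> U}"
  proof (subst openin_subopen, intro ballI)
    fix p assume p: "p \<in> {p \<in> topspace ?X. (case p of (x, y) \<Rightarrow> Omega_mult V A x y) \<in> U}"
    obtain x y where xy: "p = (x, y)" "x \<in> Omega V A" "y \<in> Omega V A" "Omega_mult V A x y \<in> U"
      using p by (auto simp: topspace_Omega_top)
    obtain \<theta> where t: "\<theta> \<in> V_congs V A" "Bset V A \<theta> (Omega_mult V A x y \<theta>) \<subseteq> U"
      using open_char[OF pv A] U xy(4) by blast
    define T where "T = Bset V A \<theta> (x \<theta>) \<times> Bset V A \<theta> (y \<theta>)"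
    have "openin ?X T" unfolding T_def openin_prod_Times_iff using Bset_clopen(1)[OF t(1)] by blast
    moreover have "p \<in> T" unfolding T_def Bset_def using xy by auto
    moreover have "T \<subseteq> {p \<in> topspace ?X. (case p of (x, y) \<Rightarrow> Omega_mult V A x y) \<in> U}"
    proof
      fix q assume q: "q \<in> T"
      then obtain x' y' where q': "q = (x', y')" "x' \<in> Omega V A" "y' \<in> Omega V A" "x' \<theta> = x \<theta>" "y' \<theta> = y \<theta>"
        unfolding T_def Bset_def by auto
      obtain u v where uv: "u \<in> x \<theta>" "v \<in> y \<theta>" using Omega_cls(2)[OF xy(2) t(1)] Omega_cls(2)[OF xy(3) t(1)] by blast
      have "Omega_mult V A x' y' \<theta> = Omega_mult V A x y \<theta>"
        using mult_app[OF q'(2,3) t(1)] mult_app[OF xy(2,3) t(1) uv] uv q' by simp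
      then have "Omega_mult V A x' y' \<in> Bset V A \<theta> (Omega_mult V A x y \<theta>)"
        unfolding Bset_def using mult_Omega q' by auto
      then show "q \<in> {p \<in> topspace ?X. (case p of (x, y) \<Rightarrow> Omega_mult V A x y) \<in> U}"
        using t q' by (auto simp: topspace_Omega_top)
    qed
    ultimately show "\<exists>T. openin ?X T \<and> p \<in> T \<and> T \<subseteq> {p \<in> topspace ?X. (case p of (x, y) \<Rightarrow> Omega_mult V A x y) \<in> U}"
      by blast
  qed
qed



lemma fold_in:
  assumes "sgrp S m" "a \<in> S" "set xs \<subseteq> S"
  shows "foldl m a xs \<in> S"
  using assms(2,3)
proof (induction xs arbitrary: a)
  case (Cons x xs)
  then have "m a x \<in> S" using assms(1) unfolding sgrp_def by auto
  then show ?case using Cons by simp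
qed simp

lemma fold_assoc:
  assumes sg: "sgrp S m" and "a \<in> S" "b \<in> S" "set xs \<subseteq> S"
  shows "foldl m (m a b) xs = m a (foldl m b xs)"
  using assms(2-4)
proof (induction xs arbitrary: b)
  case (Cons x xs)
  have bx: "m b x \<in> S" using Cons sg unfolding sgrp_def by auto
  have "foldl m (m a b) (x # xs) = foldl m (m (m a b) x) xs" by simp
  also have "m (m a b) x = m a (m b x)" using Cons sg unfolding sgrp_def by auto
  also have "foldl m (m a (m b x)) xs = m a (foldl m (m b x) xs)" using Cons bx by auto
  finally show ?case by simp
qed simp

lemma foldl_hom:
  assumes h: "shom S m T n e" and sg: "sgrp S m" and "a \<in> S" "set ys \<subseteq> S"
  shows "foldl n (e a) (map e ys) = e (foldl m a ys)"
  using assms(3,4)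
proof (induction ys arbitrary: a)
  case (Cons y ys)
  have "m a y \<in> S" using Cons sg unfolding sgrp_def by auto
  moreover have "n (e a) (e y) = e (m a y)" using Cons h unfolding shom_def by auto
  ultimately show ?case using Cons by simp
qed simp

lemma nilpotent_transport:
  assumes fs: "finite_sgrp S m" and nil: "nilpotent_sgrp S m" and inj: "inj_on e S" and im: "e ` S = T"
    and h: "shom S m T n e"
  shows "nilpotent_sgrp T n"
proof -
  have sg: "sgrp S m" using fs unfolding finite_sgrp_def by auto
  obtain z k where z: "z \<in> S" "k \<ge> 1" "\<And>xs. length xs = k \<Longrightarrow> set xs \<subseteq> S \<Longrightarrow> foldl m (hd xs) (tl xs) = z"
    using nil unfolding nilpotent_sgrp_def by blast
  have "foldl n (hd xs) (tl xs) = e z" if xs: "length xs = k" "set xs \<subseteq> T" for xs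
  proof -
    define ys where "ys = map (inv_into S e) xs"
    have ysS: "set ys \<subseteq> S" unfolding ys_def using xs im by (auto intro: inv_into_into)
    have xs_eq: "xs = map e ys" unfolding ys_def using xs im by (auto simp: map_idI f_inv_into_f intro!: map_idI[symmetric])
    have "ys \<noteq> []" using xs z(2) unfolding ys_def by auto
    then obtain y ys' where yy: "ys = y # ys'" by (cases ys) auto
    have "foldl n (hd xs) (tl xs) = foldl n (e y) (map e ys')" using xs_eq yy by simp
    also have "\<dots> = e (foldl m y ys')" using foldl_hom[OF h sg] ysS yy by auto
    also have "foldl m y ys' = z" using z(3)[of ys] xs ysS yy unfolding ys_def by auto
    finally show ?thesis .
  qed
  moreover have "e z \<in> T" using z im by auto
  ultimately show ?thesis unfolding nilpotent_sgrp_def using z(2) by blast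
qed

section \<open>A nilpotent semigroup separating a word\<close>

definition nmul :: "nat \<Rightarrow> 'a list option \<Rightarrow> 'a list option \<Rightarrow> 'a list option" where
  "nmul n a b = (case a of Some u \<Rightarrow> (case b of Some v \<Rightarrow> (if length (u @ v) \<le> n then Some (u @ v) else None) | None \<Rightarrow> None) | None \<Rightarrow> None)"

definition Sn :: "'a set \<Rightarrow> nat \<Rightarrow> 'a list option set" where
  "Sn A n = insert None (Some ` {u \<in> Aplus A. length u \<le> n})"

lemma Sn_sgrp: "finite A \<Longrightarrow> finite_sgrp (Sn A n) (nmul n)"
  unfolding finite_sgrp_def sgrp_def
proof (intro conjI ballI)
  assume "finite A"
  then have "finite {u. set u \<subseteq> A \<and> length u \<le> n}" by (rule finite_lists_length_le)
  then have "finite {u \<in> Aplus A. length u \<le> n}" by (rule rev_finite_subset) (auto simp: Aplus_def)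
  then show "finite (Sn A n)" unfolding Sn_def by auto
next
  show "Sn A n \<noteq> {}" unfolding Sn_def by auto
next
  fix x y assume "x \<in> Sn A n" "y \<in> Sn A n"
  then show "nmul n x y \<in> Sn A n" unfolding Sn_def nmul_def Aplus_def by (auto split: option.splits)
next
  fix x y z assume "x \<in> Sn A n" "y \<in> Sn A n" "z \<in> Sn A n"
  show "nmul n (nmul n x y) z = nmul n x (nmul n y z)"
    unfolding nmul_def by (auto split: option.splits)
qed

lemma Sn_fold:
  assumes "a \<in> Sn A n" "set xs \<subseteq> Sn A n" "foldl (nmul n) a xs = Some u"
  shows "\<exists>u0. a = Some u0 \<and> length u0 + length xs \<le> length u"
  using assms
proof (induction xs arbitrary: a)
  case (Cons x xs)
  have ax: "nmul n a x \<in> Sn A n" using Sn_sgrp[of A n] Cons(2,3)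
    unfolding Sn_def nmul_def Aplus_def by (auto split: option.splits)
  from Cons.IH[OF ax] Cons(3,4) obtain u1 where u1: "nmul n a x = Some u1" "length u1 + length xs \<le> length u"
    by auto
  then obtain u0 u2 where "a = Some u0" "x = Some u2" "u1 = u0 @ u2"
    unfolding nmul_def by (auto split: option.splits if_splits)
  moreover have "u2 \<noteq> []" using Cons(3) \<open>x = Some u2\<close> unfolding Sn_def Aplus_def by auto
  then have "length u2 \<ge> 1" by (cases u2) auto
  ultimately show ?case using u1 by auto
qed simp

lemma Sn_nil: "finite A \<Longrightarrow> nilpotent_sgrp (Sn A n) (nmul n)"
  unfolding nilpotent_sgrp_def
proof (intro bexI[of _ None] exI[of _ "Suc n"] conjI allI impI)
  fix xs :: "'a list option list" assume A: "finite A" and xs: "length xs = Suc n \<and> set xs \<subseteq> Sn A n"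
  then obtain y ys where yy: "xs = y # ys" by (cases xs) auto
  have sg: "sgrp (Sn A n) (nmul n)" using Sn_sgrp[OF A] unfolding finite_sgrp_def by auto
  show "foldl (nmul n) (hd xs) (tl xs) = None"
  proof (rule ccontr)
    assume "foldl (nmul n) (hd xs) (tl xs) \<noteq> None"
    then obtain u where u: "foldl (nmul n) y ys = Some u" using yy by auto
    have "foldl (nmul n) y ys \<in> Sn A n" using fold_in[OF sg] xs yy by auto
    then have "length u \<le> n" using u unfolding Sn_def by auto
    moreover obtain u0 where "y = Some u0" "length u0 + length ys \<le> length u" using Sn_fold[of y A n ys u] u xs yy by auto
    moreover have "u0 \<noteq> []" using xs yy \<open>y = Some u0\<close> unfolding Sn_def Aplus_def by auto
    moreover have "length u0 \<ge> 1" using \<open>u0 \<noteq> []\<close> by (cases u0) auto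
    ultimately show False using xs yy by auto
  qed
qed (auto simp: Sn_def)

lemma sep_cong:
  assumes pv: "pseudovariety V" and N: "contains_N V" and fin: "finite A" and w: "w \<in> Aplus A"
  shows "\<exists>\<theta>\<in>V_congs V A. \<forall>v. (w, v) \<in> \<theta> \<longrightarrow> v = w"
proof -
  define n where "n = length w"
  define \<phi> where "\<phi> u = (if length u \<le> n then Some u else None)" for u :: "'a list"
  have fs: "finite_sgrp (Sn A n) (nmul n)" by (rule Sn_sgrp[OF fin])
  obtain T :: "nat set" and nn e where T: "finite_sgrp T nn" "inj_on e (Sn A n)" "e ` Sn A n = T" "shom (Sn A n) (nmul n) T nn e"
    using transport[OF fs] by blast
  have "nilpotent_sgrp T nn" by (rule nilpotent_transport[OF fs Sn_nil[OF fin] T(2,3,4)])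
  then have TV: "(T, nn) \<in> V" using N T(1) unfolding contains_N_def by auto
  have phiS: "\<phi> u \<in> Sn A n" if "u \<in> Aplus A" for u using that unfolding \<phi>_def Sn_def by auto
  have phihom: "\<phi> (u @ v) = nmul n (\<phi> u) (\<phi> v)" if "u \<in> Aplus A" "v \<in> Aplus A" for u v
    using that unfolding \<phi>_def nmul_def Aplus_def by auto
  have sh: "shom (Aplus A) (@) T nn (e \<circ> \<phi>)"
    unfolding shom_def
  proof (intro conjI ballI)
    fix x assume "x \<in> Aplus A" then show "(e \<circ> \<phi>) x \<in> T" using phiS T(3) by auto
  next
    fix x y assume "x \<in> Aplus A" "y \<in> Aplus A"
    then show "(e \<circ> \<phi>) (x @ y) = nn ((e \<circ> \<phi>) x) ((e \<circ> \<phi>) y)"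
      using phihom phiS T(4) unfolding shom_def by auto
  qed
  have A: "A \<noteq> {}" using w unfolding Aplus_def by (cases w) auto
  have K: "kerA A (e \<circ> \<phi>) \<in> V_congs V A" by (rule ker_in_Vcongs[OF pv A TV sh])
  moreover have "v = w" if "(w, v) \<in> kerA A (e \<circ> \<phi>)" for v
  proof -
    have "v \<in> Aplus A" "e (\<phi> w) = e (\<phi> v)" using that unfolding kerA_def by auto
    then have "\<phi> w = \<phi> v" using T(2) phiS w unfolding inj_on_def by auto
    then show "v = w" unfolding \<phi>_def n_def by (auto split: if_splits)
  qed
  ultimately show ?thesis by blast
qed

section \<open>Recognizable languages\<close>

lemma rec_full:
  assumes pv: "pseudovariety V"
  shows "recognizable V A (Aplus A)"
  unfolding recognizable_def
proof (intro conjI exI)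
  show "({0::nat}, \<lambda>_ _. 0) \<in> V" by (rule triv_in_V[OF pv])
  show "shom (Aplus A) (@) {0::nat} (\<lambda>_ _. 0) (\<lambda>_. 0)" unfolding shom_def by auto
  show "Aplus A = {w \<in> Aplus A. (\<lambda>_. 0::nat) w \<in> (\<lambda>_. 0) ` Aplus A}" by auto
qed simp

lemma rec_compl:
  assumes r: "recognizable V A L"
  shows "recognizable V A (Aplus A - L)"
proof -
  obtain F m \<phi> where 1: "(F, m) \<in> V" "shom (Aplus A) (@) F m \<phi>" "L = {w \<in> Aplus A. \<phi> w \<in> \<phi> ` L}"
    using r unfolding recognizable_def by blast
  have "Aplus A - L = {w \<in> Aplus A. \<phi> w \<in> \<phi> ` (Aplus A - L)}"
  proof (intro equalityI subsetI)
    fix w assume w: "w \<in> {w \<in> Aplus A. \<phi> w \<in> \<phi> ` (Aplus A - L)}"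
    then obtain u where u: "u \<in> Aplus A" "u \<notin> L" "\<phi> w = \<phi> u" by auto
    show "w \<in> Aplus A - L"
    proof
      show "w \<in> Aplus A" using w by auto
      show "w \<notin> L"
      proof
        assume "w \<in> L"
        then have "u \<in> {w \<in> Aplus A. \<phi> w \<in> \<phi> ` L}" using u by (auto intro: image_eqI[of _ _ w])
        then show False using u 1(3) by auto
      qed
    qed
  qed auto
  then show ?thesis unfolding recognizable_def using 1 by blast
qed

lemma rec_pullback:
  assumes r: "recognizable V B L'" and \<sigma>1: "\<And>w. w \<in> Aplus A \<Longrightarrow> \<sigma> w \<in> Aplus B"
    and \<sigma>2: "\<And>u v. u \<in> Aplus A \<Longrightarrow> v \<in> Aplus A \<Longrightarrow> \<sigma> (u @ v) = \<sigma> u @ \<sigma> v"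
  shows "recognizable V A {w \<in> Aplus A. \<sigma> w \<in> L'}"
proof -
  obtain F m \<phi> where 1: "(F, m) \<in> V" "shom (Aplus B) (@) F m \<phi>" "L' = {w \<in> Aplus B. \<phi> w \<in> \<phi> ` L'}"
    using r unfolding recognizable_def by blast
  let ?L = "{w \<in> Aplus A. \<sigma> w \<in> L'}"
  have sh: "shom (Aplus A) (@) F m (\<phi> \<circ> \<sigma>)"
    using 1(2) \<sigma>1 \<sigma>2 unfolding shom_def by auto
  have "?L = {w \<in> Aplus A. (\<phi> \<circ> \<sigma>) w \<in> (\<phi> \<circ> \<sigma>) ` ?L}"
  proof (intro equalityI subsetI)
    fix w assume w: "w \<in> {w \<in> Aplus A. (\<phi> \<circ> \<sigma>) w \<in> (\<phi> \<circ> \<sigma>) ` ?L}"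
    then obtain u where u: "u \<in> ?L" "\<phi> (\<sigma> w) = \<phi> (\<sigma> u)" by auto
    have "\<sigma> w \<in> {w \<in> Aplus B. \<phi> w \<in> \<phi> ` L'}" using w u \<sigma>1 by auto
    then show "w \<in> ?L" using w 1(3) by auto
  qed auto
  then show ?thesis unfolding recognizable_def using 1(1) sh by blast
qed

lemma rec_restrict:
  assumes r: "recognizable V A L" and B: "B \<subseteq> A"
  shows "recognizable V B (L \<inter> Aplus B)"
proof -
  obtain F m \<phi> where 1: "(F, m) \<in> V" "shom (Aplus A) (@) F m \<phi>" "L = {w \<in> Aplus A. \<phi> w \<in> \<phi> ` L}"
    using r unfolding recognizable_def by blast
  have AB: "Aplus B \<subseteq> Aplus A" using B unfolding Aplus_def by auto
  have sh: "shom (Aplus B) (@) F m \<phi>" using 1(2) AB unfolding shom_def by auto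
  have "L \<inter> Aplus B = {w \<in> Aplus B. \<phi> w \<in> \<phi> ` (L \<inter> Aplus B)}"
  proof (intro equalityI subsetI)
    fix w assume w: "w \<in> {w \<in> Aplus B. \<phi> w \<in> \<phi> ` (L \<inter> Aplus B)}"
    then have "w \<in> {w \<in> Aplus A. \<phi> w \<in> \<phi> ` L}" using AB by auto
    then show "w \<in> L \<inter> Aplus B" using w 1(3) by auto
  qed auto
  then show ?thesis unfolding recognizable_def using 1(1) sh by blast
qed


lemma conc_one_letter:
  "Aplus {a0} - conc (Aplus {a0}) (Aplus {a0}) = {[a0]}"
proof (intro equalityI subsetI)
  fix w assume w: "w \<in> Aplus {a0} - conc (Aplus {a0}) (Aplus {a0})"
  then obtain b w' where bw: "w = b # w'" "set w \<subseteq> {a0}" unfolding Aplus_def by (cases w) auto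
  have "w' = []"
  proof (rule ccontr)
    assume "w' \<noteq> []"
    then have "w \<in> conc (Aplus {a0}) (Aplus {a0})" unfolding conc_def Aplus_def using bw
      by (intro CollectI exI[of _ "[b]"] exI[of _ w']) auto
    then show False using w by auto
  qed
  then show "w \<in> {[a0]}" using bw by auto
next
  fix w assume "w \<in> {[a0]}"
  then have "w = [a0]" by simp
  moreover have "[a0] \<notin> conc (Aplus {a0}) (Aplus {a0})"
  proof
    assume "[a0] \<in> conc (Aplus {a0}) (Aplus {a0})"
    then obtain u v where "[a0] = u @ v" "u \<noteq> []" "v \<noteq> []" unfolding conc_def Aplus_def by auto
    then show False by (cases u) auto
  qed
  ultimately show "w \<in> Aplus {a0} - conc (Aplus {a0}) (Aplus {a0})" unfolding Aplus_def by auto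
qed

lemma letter_rec:
  fixes a :: 'a and A :: "'a set"
  assumes
 pv: "pseudovariety V" and cc: "\<forall>B::'a set. finite B \<longrightarrow> conc_closed_on V B" and a: "a \<in> A"
  shows "recognizable V A {[a]}"
proof -
  define a0 :: 'a where "a0 = a"
  have "recognizable V {a0} (conc (Aplus {a0}) (Aplus {a0}))"
    using cc rec_full[OF pv] unfolding conc_closed_on_def by blast
  then have r: "recognizable V {a0} {[a0]}" using rec_compl conc_one_letter by metis
  define f where "f b = (if b = a then [a0] else [a0, a0])" for b
  define \<sigma> where "\<sigma> w = concat (map f w)" for w
  have \<sigma>1: "\<sigma> w \<in> Aplus {a0}" if "w \<in> Aplus A" for w
    using that unfolding \<sigma>_def Aplus_def f_def by (cases w) auto
  have \<sigma>2: "\<sigma> (u @ v) = \<sigma> u @ \<sigma> v" for u v unfolding \<sigma>_def by simp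
  have "recognizable V A {w \<in> Aplus A. \<sigma> w \<in> {[a0]}}" by (rule rec_pullback[OF r \<sigma>1 \<sigma>2])
  moreover have "{w \<in> Aplus A. \<sigma> w \<in> {[a0]}} = {[a]}"
  proof (intro equalityI subsetI)
    fix w assume "w \<in> {w \<in> Aplus A. \<sigma> w \<in> {[a0]}}"
    then have w: "w \<noteq> []" "\<sigma> w = [a0]" unfolding Aplus_def by auto
    then obtain b w' where bw: "w = b # w'" by (cases w) auto
    have "f b \<noteq> []" unfolding f_def by auto
    have "w' = []"
    proof (rule ccontr)
      assume "w' \<noteq> []"
      then obtain c w'' where "w' = c # w''" by (cases w') auto
      then have "length (\<sigma> w) \<ge> length (f b) + length (f c)" using bw unfolding \<sigma>_def by simp
      moreover have "length (f b) \<ge> 1" "length (f c) \<ge> 1" unfolding f_def by auto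
      ultimately show False using w by simp
    qed
    then have "f b = [a0]" using w bw unfolding \<sigma>_def by simp
    then have "b = a" unfolding f_def by (auto split: if_splits)
    then show "w \<in> {[a]}" using bw \<open>w' = []\<close> by simp
  next
    fix w assume "w \<in> {[a]}"
    then show "w \<in> {w \<in> Aplus A. \<sigma> w \<in> {[a0]}}" using a unfolding Aplus_def \<sigma>_def f_def by auto
  qed
  ultimately show ?thesis by simp
qed

lemma single_rec:
  assumes pv: "pseudovariety V" and cc: "\<forall>B::'a set. finite B \<longrightarrow> conc_closed_on V B"
    and fin: "finite A" and w: "w \<in> Aplus (A::'a set)"
  shows "recognizable V A {w}"
  using w
proof (induction w)
  case Nil then show ?case unfolding Aplus_def by simp
next
  case (Cons a w)
  have a: "a \<in> A" using Cons.prems unfolding Aplus_def by auto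
  show ?case
  proof (cases "w = []")
    case True then show ?thesis using letter_rec[OF pv cc a] by simp
  next
    case False
    then have "w \<in> Aplus A" using Cons.prems unfolding Aplus_def by auto
    then have "recognizable V A {w}" by (rule Cons.IH)
    moreover have "recognizable V A {[a]}" using letter_rec[OF pv cc a] .
    ultimately have "recognizable V A (conc {[a]} {w})" using cc fin unfolding conc_closed_on_def by blast
    moreover have "conc {[a]} {w} = {a # w}" unfolding conc_def by auto
    ultimately show ?thesis by simp
  qed
qed



lemma quotient_in_V:
  assumes pv: "pseudovariety V" and t: "\<theta> \<in> V_congs V A" and fs: "finite_sgrp S m"
    and sh: "shom (Aplus A) (@) S m \<psi>" and on: "\<psi> ` Aplus A = S"
    and k: "\<And>u v. (u, v) \<in> \<theta> \<Longrightarrow> \<psi> u = \<psi> v"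
  shows "(S, m) \<in> V"
proof -
  obtain F mF \<phi> where 1: "(F, mF) \<in> V" "shom (Aplus A) (@) F mF \<phi>" "\<phi> ` Aplus A = F" "\<theta> = kerA A \<phi>"
    using t by (rule Vcongs_E)
  define h where "h f = \<psi> (SOME u. u \<in> Aplus A \<and> \<phi> u = f)" for f
  have hphi: "h (\<phi> u) = \<psi> u" if u: "u \<in> Aplus A" for u
  proof -
    have "\<exists>u'. u' \<in> Aplus A \<and> \<phi> u' = \<phi> u" using u by blast
    then have "(SOME u'. u' \<in> Aplus A \<and> \<phi> u' = \<phi> u) \<in> Aplus A \<and> \<phi> (SOME u'. u' \<in> Aplus A \<and> \<phi> u' = \<phi> u) = \<phi> u"
      by (rule someI_ex)
    then have "((SOME u'. u' \<in> Aplus A \<and> \<phi> u' = \<phi> u), u) \<in> \<theta>" using u 1(4) unfolding kerA_def by auto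
    then show ?thesis unfolding h_def using k by blast
  qed
  have "shom F mF S m h"
    unfolding shom_def
  proof (intro conjI ballI)
    fix x assume "x \<in> F"
    then obtain u where "u \<in> Aplus A" "x = \<phi> u" using 1(3) by auto
    then show "h x \<in> S" using hphi sh unfolding shom_def by auto
  next
    fix x y assume "x \<in> F" "y \<in> F"
    then obtain u v where uv: "u \<in> Aplus A" "x = \<phi> u" "v \<in> Aplus A" "y = \<phi> v" using 1(3) by auto
    then have "mF x y = \<phi> (u @ v)" using 1(2) unfolding shom_def by auto
    then have "h (mF x y) = \<psi> (u @ v)" using hphi uv Aplus_app by auto
    also have "\<dots> = m (\<psi> u) (\<psi> v)" using sh uv unfolding shom_def by auto
    finally show "h (mF x y) = m (h x) (h y)" using hphi uv by simp
  qed
  moreover have "h ` F = S"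
  proof -
    have "h ` F = h ` \<phi> ` Aplus A" using 1(3) by simp
    also have "\<dots> = \<psi> ` Aplus A" using hphi by (auto simp: image_image)
    finally show ?thesis using on by simp
  qed
  ultimately show ?thesis using pv_hom[OF pv 1(1) fs] by blast
qed

lemma psi_facts:
  assumes sg: "sgrp S m" and g: "g ` A \<subseteq> S"
  defines "\<psi> \<equiv> (\<lambda>w. foldl m (g (hd w)) (map g (tl w)))"
  shows "shom (Aplus A) (@) S m \<psi>"
proof -
  have in1: "\<psi> w \<in> S" if w0: "w \<in> Aplus A" for w
  proof -
    obtain a w' where w: "w = a # w'" using w0 unfolding Aplus_def by (cases w) auto
    have "g a \<in> S" "set (map g w') \<subseteq> S" using w0 w g unfolding Aplus_def by auto
    then show ?thesis unfolding \<psi>_def w using fold_in[OF sg] by simp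
  qed
  have "\<psi> (u @ v) = m (\<psi> u) (\<psi> v)" if uv0: "u \<in> Aplus A" "v \<in> Aplus A" for u v
  proof -
    obtain a u' where u: "u = a # u'" using uv0 unfolding Aplus_def by (cases u) auto
    obtain b v' where v: "v = b # v'" using uv0 unfolding Aplus_def by (cases v) auto
    have S1: "g a \<in> S" "set (map g u') \<subseteq> S" "g b \<in> S" "set (map g v') \<subseteq> S"
      using uv0 u v g unfolding Aplus_def by auto
    have P: "foldl m (g a) (map g u') \<in> S" using fold_in[OF sg] S1 by auto
    have "\<psi> (u @ v) = foldl m (foldl m (g a) (map g u')) (g b # map g v')" unfolding \<psi>_def u v by simp
    also have "\<dots> = foldl m (m (foldl m (g a) (map g u')) (g b)) (map g v')" by simp
    also have "\<dots> = m (foldl m (g a) (map g u')) (foldl m (g b) (map g v'))"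
      using fold_assoc[OF sg P S1(3,4)] .
    finally show ?thesis unfolding \<psi>_def u v by simp
  qed
  then show ?thesis using in1 unfolding shom_def by auto
qed

lemma dirN:
  fixes V :: "(nat set \<times> (nat \<Rightarrow> nat \<Rightarrow> nat)) set"
  assumes pv: "pseudovariety V" and inf: "infinite (UNIV :: 'a set)"
    and cc: "\<forall>B::'a set. finite B \<longrightarrow> conc_closed_on V B"
  shows "contains_N V"
  unfolding contains_N_def
proof (intro allI impI)
  fix S :: "nat set" and m :: "nat \<Rightarrow> nat \<Rightarrow> nat" assume Sm:
 "finite_sgrp S m \<and> nilpotent_sgrp S m"
  then have fS: "finite S" and sg: "sgrp S m" unfolding finite_sgrp_def by auto
  obtain z k where z: "z \<in> S" "k \<ge> 1" "\<And>xs. length xs = k \<Longrightarrow> set xs \<subseteq> S \<Longrightarrow> foldl m (hd xs) (tl xs) = z"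
    using Sm unfolding nilpotent_sgrp_def by blast
  obtain A :: "'a set" where A: "finite A" "card A = card S"
    using infinite_arbitrarily_large[OF inf] by blast
  obtain g where g: "bij_betw g A S" using finite_same_card_bij[OF A(1) fS A(2)] by blast
  have gA: "g ` A = S" using g unfolding bij_betw_def by auto
  have Sne: "S \<noteq> {}" using sg unfolding sgrp_def by auto
  then have Ane: "A \<noteq> {}" using gA by auto
  define \<psi> where "\<psi> w = foldl m (g (hd w)) (map g (tl w))" for w
  have sh: "shom (Aplus A) (@) S m \<psi>" unfolding \<psi>_def by (rule psi_facts[OF sg]) (use gA in auto)
  have on: "\<psi> ` Aplus A = S"
  proof
    show "\<psi> ` Aplus A \<subseteq> S" using sh unfolding shom_def by auto
    show "S \<subseteq> \<psi> ` Aplus A"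
    proof
      fix s assume "s \<in> S"
      then obtain a where "a \<in> A" "g a = s" using gA by auto
      then have "[a] \<in> Aplus A" "\<psi> [a] = s" unfolding Aplus_def \<psi>_def by auto
      then show "s \<in> \<psi> ` Aplus A" by (metis image_eqI)
    qed
  qed
  have long: "\<psi> w = z" if w: "w \<in> Aplus A" "length w \<ge> k" for w
  proof (cases "length w = k")
    case True
    then show ?thesis using z(3)[of "map g w"] w gA unfolding \<psi>_def Aplus_def
      by (cases w) auto
  next
    case False
    define u where "u = take (length w - k) w"
    define v where "v = drop (length w - k) w"
    have uv: "w = u @ v" unfolding u_def v_def by simp
    have lv: "length v = k" unfolding v_def using w by simp
    have "u \<noteq> []" unfolding u_def using w False unfolding Aplus_def by simp

    moreover have "v \<noteq> []" using lv z(2) by auto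
    ultimately have uvA: "u \<in> Aplus A" "v \<in> Aplus A" using w uv unfolding Aplus_def by auto
    have pv': "\<psi> v = z" using z(3)[of "map g v"] lv uvA gA z(2) unfolding \<psi>_def Aplus_def
      by (cases v) auto

    obtain b v' where bv: "v = b # v'" using \<open>v \<noteq> []\<close> by (cases v) auto
    have su: "\<psi> u \<in> S" using sh uvA unfolding shom_def by auto
    have S1: "g b \<in> S" "set (map g v') \<subseteq> S" using uvA bv gA unfolding Aplus_def by auto
    have "\<psi> w = m (\<psi> u) (\<psi> v)" using sh uvA uv unfolding shom_def by auto
    also have "\<dots> = m (\<psi> u) (foldl m (g b) (map g v'))" unfolding \<psi>_def bv by simp
    also have "\<dots> = foldl m (m (\<psi> u) (g b)) (map g v')" using fold_assoc[OF sg su S1] by simp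
    also have "\<dots> = z"
    proof -
      have "m (\<psi> u) (g b) \<in> S" using su S1 sg unfolding sgrp_def by auto
      then show ?thesis using z(3)[of "m (\<psi> u) (g b) # map g v'"] lv bv S1 by auto
    qed
    finally show ?thesis .
  qed
  have sep: "\<exists>\<theta>\<in>V_congs V A. \<forall>v. (w, v) \<in> \<theta> \<longrightarrow> v = w" if w: "w \<in> Aplus A" for w
  proof -
    have "recognizable V A {w}" by (rule single_rec[OF pv cc A(1) w])
    then obtain \<theta> where "\<theta> \<in> V_congs V A" "\<forall>u v. (u, v) \<in> \<theta> \<longrightarrow> u \<in> {w} \<longrightarrow> v \<in> {w}"
      using rec_iff[OF pv Ane] by blast
    then show ?thesis by auto
  qed
  define W where "W = {w \<in> Aplus A. length w \<le> k}"
  have fW: "finite W"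
  proof -
    have "finite {u. set u \<subseteq> A \<and> length u \<le> k}" by (rule finite_lists_length_le[OF A(1)])
    then show ?thesis unfolding W_def Aplus_def by (rule rev_finite_subset) auto
  qed
  define sc where "sc w = (SOME \<theta>. \<theta> \<in> V_congs V A \<and> (\<forall>v. (w, v) \<in> \<theta> \<longrightarrow> v = w))" for w
  have scP: "sc w \<in> V_congs V A \<and> (\<forall>v. (w, v) \<in> sc w \<longrightarrow> v = w)" if "w \<in> W" for w
    unfolding sc_def by (rule someI_ex) (use sep that W_def in auto)
  define \<theta> where "\<theta> = (Aplus A \<times> Aplus A) \<inter> \<Inter>(sc ` W)"
  have t: "\<theta> \<in> V_congs V A" unfolding \<theta>_def
    by (rule Vcongs_Inter[OF pv _ _ univ_in_Vcongs[OF pv Ane]]) (use fW scP in auto)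
  have "\<psi> u = \<psi> v" if uv: "(u, v) \<in> \<theta>" for u v
  proof -
    have uvA: "u \<in> Aplus A" "v \<in> Aplus A" using uv unfolding \<theta>_def by auto
    have eqv: "equiv (Aplus A) \<theta>" using Vcongs_props(2)[OF t] .
    then have vu: "(v, u) \<in> \<theta>" using uv unfolding equiv_def sym_def by blast
    show ?thesis
    proof (cases "u \<in> W")
      case True
      then have "(u, v) \<in> sc u" using uv unfolding \<theta>_def by auto
      then show ?thesis using scP[OF True] by auto
    next
      case F1: False
      show ?thesis
      proof (cases "v \<in> W")
        case True
        then have "(v, u) \<in> sc v" using vu unfolding \<theta>_def by auto
        then show ?thesis using scP[OF True] by auto
      next
        case False
        then show ?thesis using F1 long uvA unfolding W_def by auto
      qed
    qed
  qed
  then show "(S, m) \<in> V" using quotient_in_V[OF pv t _ sh on] Sm by blast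
qed

lemma map_hom_eq:
  assumes sh: "shom (Aplus A) (@) F m \<phi>" and \<pi>: "\<And>a. a \<in> A \<Longrightarrow> \<pi> a \<in> A \<and> \<phi> [\<pi> a] = \<phi> [a]"
  shows "w \<in> Aplus A \<Longrightarrow> \<phi> (map \<pi> w) = \<phi> w"
proof (induction w)
  case Nil then show ?case unfolding Aplus_def by simp
next
  case (Cons a w)
  have a: "a \<in> A" using Cons.prems unfolding Aplus_def by auto
  show ?case
  proof (cases "w = []")
    case True then show ?thesis using \<pi>[OF a] by simp
  next
    case False
    then have wA: "w \<in> Aplus A" using Cons.prems unfolding Aplus_def by auto
    have mwA: "map \<pi> w \<in> Aplus A" using wA \<pi> unfolding Aplus_def by auto
    have aA: "[a] \<in> Aplus A" "[\<pi> a] \<in> Aplus A" using a \<pi>[OF a] unfolding Aplus_def by auto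
    have "\<phi> (map \<pi> (a # w)) = \<phi> ([\<pi> a] @ map \<pi> w)" by simp
    also have "\<dots> = m (\<phi> [\<pi> a]) (\<phi> (map \<pi> w))" using sh aA mwA unfolding shom_def by blast
    also have "\<dots> = m (\<phi> [a]) (\<phi> w)" using \<pi>[OF a] Cons.IH[OF wA] by simp
    also have "\<dots> = \<phi> ([a] @ w)" using sh aA wA unfolding shom_def by metis
    finally show ?thesis by simp
  qed
qed

lemma dir12:
  fixes V :: "(nat set \<times> (nat \<Rightarrow> nat \<Rightarrow> nat)) set" and A :: "'a set"
  assumes pv: "pseudovariety V" and cc: "\<forall>B::'a set. finite B \<longrightarrow> conc_closed_on V B"
  shows "conc_closed_on V A"
  unfolding conc_closed_on_def
proof (intro allI impI)
  fix K L assume KL: "recognizable V A K \<and> recognizable V A L"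
  obtain FK mK \<phi>K where K1: "(FK, mK) \<in> V" "shom (Aplus A) (@) FK mK \<phi>K" "K = {w \<in> Aplus A. \<phi>K w \<in> \<phi>K ` K}"
    and KA: "K \<subseteq> Aplus A"
    using KL unfolding recognizable_def by blast
  obtain FL mL \<phi>L where L1: "(FL, mL) \<in> V" "shom (Aplus A) (@) FL mL \<phi>L" "L = {w \<in> Aplus A. \<phi>L w \<in> \<phi>L ` L}"
    and LA: "L \<subseteq> Aplus A"
    using KL unfolding recognizable_def by blast
  define ty where "ty a = (\<phi>K [a], \<phi>L [a])" for a
  define rep where "rep t = (SOME a'. a' \<in> A \<and> ty a' = t)" for t
  define \<pi> where "\<pi> a = rep (ty a)" for a
  have \<pi>A: "\<pi> a \<in> A \<and> ty (\<pi> a) = ty a" if "a \<in> A" for a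
    unfolding \<pi>_def rep_def by (rule someI_ex) (use that in auto)
  define B where "B = \<pi> ` A"
  have BA: "B \<subseteq> A" using \<pi>A unfolding B_def by auto
  have finB: "finite B"
  proof -
    have "ty ` A \<subseteq> FK \<times> FL" using K1(2) L1(2) unfolding ty_def shom_def Aplus_def by auto
    moreover have "finite (FK \<times> FL)" using pv_fin[OF pv K1(1)] pv_fin[OF pv L1(1)] unfolding finite_sgrp_def by auto
    ultimately have "finite (ty ` A)" by (rule finite_subset)
    then have "finite (rep ` ty ` A)" by simp
    moreover have "B = rep ` ty ` A" unfolding B_def \<pi>_def by auto
    ultimately show ?thesis by simp
  qed
  have eK: "\<phi>K (map \<pi> w) = \<phi>K w" if "w \<in> Aplus A" for w
    by (rule map_hom_eq[OF K1(2) _ that]) (use \<pi>A in \<open>auto simp: ty_def\<close>)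
  have eL: "\<phi>L (map \<pi> w) = \<phi>L w" if "w \<in> Aplus A" for w
    by (rule map_hom_eq[OF L1(2) _ that]) (use \<pi>A in \<open>auto simp: ty_def\<close>)
  have mapB: "map \<pi> w \<in> Aplus B" if "w \<in> Aplus A" for w using that unfolding Aplus_def B_def by auto
  have AB: "Aplus B \<subseteq> Aplus A" using BA unfolding Aplus_def by auto
  have Kiff: "map \<pi> w \<in> K \<longleftrightarrow> w \<in> K" if w: "w \<in> Aplus A" for w
  proof -
    have mw: "map \<pi> w \<in> Aplus A" using mapB[OF w] AB by auto
    have "map \<pi> w \<in> K \<longleftrightarrow> \<phi>K (map \<pi> w) \<in> \<phi>K ` K" using mw K1(3) by blast
    also have "\<dots> \<longleftrightarrow> \<phi>K w \<in> \<phi>K ` K" using eK[OF w] by simp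
    also have "\<dots> \<longleftrightarrow> w \<in> K" using w K1(3) by blast
    finally show ?thesis .
  qed
  have Liff: "map \<pi> w \<in> L \<longleftrightarrow> w \<in> L" if w: "w \<in> Aplus A" for w
  proof -
    have mw: "map \<pi> w \<in> Aplus A" using mapB[OF w] AB by auto
    have "map \<pi> w \<in> L \<longleftrightarrow> \<phi>L (map \<pi> w) \<in> \<phi>L ` L" using mw L1(3) by blast
    also have "\<dots> \<longleftrightarrow> \<phi>L w \<in> \<phi>L ` L" using eL[OF w] by simp
    also have "\<dots> \<longleftrightarrow> w \<in> L" using w L1(3) by blast
    finally show ?thesis .
  qed
  have rK: "recognizable V B (K \<inter> Aplus B)" by (rule rec_restrict[OF _ BA]) (use KL in auto)
  have rL: "recognizable V B (L \<inter> Aplus B)" by (rule rec_restrict[OF _ BA]) (use KL in auto)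
  have rKL: "recognizable V B (conc (K \<inter> Aplus B) (L \<inter> Aplus B))"
    using cc finB rK rL unfolding conc_closed_on_def by blast
  have r: "recognizable V A {w \<in> Aplus A. map \<pi> w \<in> conc (K \<inter> Aplus B) (L \<inter> Aplus B)}"
    by (rule rec_pullback[OF rKL mapB]) auto
  have "{w \<in> Aplus A. map \<pi> w \<in> conc (K \<inter> Aplus B) (L \<inter> Aplus B)} = conc K L"
  proof (intro equalityI subsetI)
    fix w assume "w \<in> {w \<in> Aplus A. map \<pi> w \<in> conc (K \<inter> Aplus B) (L \<inter> Aplus B)}"
    then obtain u' v' where w: "w \<in> Aplus A" "map \<pi> w = u' @ v'" "u' \<in> K" "u' \<in> Aplus B" "v' \<in> L" "v' \<in> Aplus B"
      unfolding conc_def by auto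
    define u where "u = take (length u') w"
    define v where "v = drop (length u') w"
    have "length u' \<le> length w" using w(2) by (metis length_append length_map le_add1)
    have mu: "map \<pi> u = u'" unfolding u_def using w(2) by (metis append_eq_conv_conj take_map)
    have mv: "map \<pi> v = v'" unfolding v_def using w(2) by (metis append_eq_conv_conj drop_map)
    have "u \<noteq> []" using mu w(4) unfolding Aplus_def by auto
    moreover have "v \<noteq> []" using mv w(6) unfolding Aplus_def by auto
    moreover have wuv: "w = u @ v" unfolding u_def v_def by simp
    ultimately have uvA: "u \<in> Aplus A" "v \<in> Aplus A" using w(1) unfolding Aplus_def by auto
    have "u \<in> K" using Kiff[OF uvA(1)] mu w(3) by simp
    moreover have "v \<in> L" using Liff[OF uvA(2)] mv w(5) by simp
    ultimately show "w \<in> conc K L" using wuv unfolding conc_def by auto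
  next
    fix w assume "w \<in> conc K L"
    then obtain u v where uv: "w = u @ v" "u \<in> K" "v \<in> L" unfolding conc_def by auto
    have uvA: "u \<in> Aplus A" "v \<in> Aplus A" using uv KA LA by auto
    have "map \<pi> u \<in> K \<inter> Aplus B" using Kiff[OF uvA(1)] uv mapB[OF uvA(1)] by auto
    moreover have "map \<pi> v \<in> L \<inter> Aplus B" using Liff[OF uvA(2)] uv mapB[OF uvA(2)] by auto
    ultimately have "map \<pi> w \<in> conc (K \<inter> Aplus B) (L \<inter> Aplus B)" using uv unfolding conc_def by auto
    moreover have "w \<in> Aplus A" using uv uvA Aplus_app by auto
    ultimately show "w \<in> {w \<in> Aplus A. map \<pi> w \<in> conc (K \<inter> Aplus B) (L \<inter> Aplus B)}" by auto
  qed
  then show "recognizable V A (conc K L)" using r by simp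
qed



lemma rec_sub: "recognizable V A L \<Longrightarrow> L \<subseteq> Aplus A"
  unfolding recognizable_def by auto

lemma conc_sub: "K \<subseteq> Aplus A \<Longrightarrow> L \<subseteq> Aplus A \<Longrightarrow> conc K L \<subseteq> Aplus A"
  unfolding conc_def using Aplus_app by blast

lemma compact_prod_Omega:
  assumes pv: "pseudovariety V"
  shows "compact_space (prod_topology (Omega_top V A) (Omega_top V A))"
  using Omega_compact[OF pv] unfolding compact_space_prod_topology by blast

lemma dir41:
  assumes pv: "pseudovariety V" and N: "contains_N V" and fin: "finite A" and mo: "mult_open V A"
  shows "conc_closed_on V A"
proof (cases "A = {}")
  case True
  then have e: "Aplus A = {}" unfolding Aplus_def by auto
  show ?thesis unfolding conc_closed_on_def
  proof (intro allI impI)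
    fix K L assume "recognizable V A K \<and> recognizable V A L"
    then have "conc K L = Aplus A" using rec_sub e unfolding conc_def by blast
    then show "recognizable V A (conc K L)" using rec_full[OF pv] by simp
  qed
next
  case False
  note Ane = False
  show ?thesis unfolding conc_closed_on_def
  proof (intro allI impI)
    fix K L assume KL: "recognizable V A K \<and> recognizable V A L"
    obtain \<theta>K where tK: "\<theta>K \<in> V_congs V A" and satK: "\<forall>u v. (u, v) \<in> \<theta>K \<longrightarrow> u \<in> K \<longrightarrow> v \<in> K" and KA: "K \<subseteq> Aplus A"
      using KL rec_iff[OF pv Ane] by blast
    obtain \<theta>L where tL: "\<theta>L \<in> V_congs V A" and satL: "\<forall>u v. (u, v) \<in> \<theta>L \<longrightarrow> u \<in> L \<longrightarrow> v \<in> L" and LA: "L \<subseteq> Aplus A"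
      using KL rec_iff[OF pv Ane] by blast
    define \<theta> where "\<theta> = \<theta>K \<inter> \<theta>L"
    have t: "\<theta> \<in> V_congs V A" unfolding \<theta>_def by (rule Vcongs_Int[OF pv tK tL])
    define OK where "OK = {x \<in> Omega V A. x \<theta> \<in> {c. c \<subseteq> K}}"
    define OL where "OL = {x \<in> Omega V A. x \<theta> \<in> {c. c \<subseteq> L}}"
    let ?X = "prod_topology (Omega_top V A) (Omega_top V A)"
    have oU: "openin ?X (OK \<times> OL)" unfolding openin_prod_Times_iff OK_def OL_def using proj_clopen(1)[OF t] by blast
    have cU: "closedin ?X (OK \<times> OL)" unfolding closedin_prod_Times_iff OK_def OL_def using proj_clopen(2)[OF t] by blast
    have kU: "compactin ?X (OK \<times> OL)" by (rule closedin_compact_space[OF compact_prod_Omega[OF pv] cU])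
    define P where "P = (\<lambda>(x, y). Omega_mult V A x y) ` (OK \<times> OL)"
    have kP: "compactin (Omega_top V A) P" unfolding P_def by (rule image_compactin[OF kU mult_cont[OF pv Ane]])
    have oP: "openin (Omega_top V A) P" using mo oU unfolding mult_open_def P_def by blast
    have PO: "P \<subseteq> Omega V A" using oP open_char[OF pv Ane] by blast
    define G0 where "G0 = {(\<theta>', z). \<theta>' \<in> V_congs V A \<and> z \<in> P \<and> Bset V A \<theta>' (z \<theta>') \<subseteq> P}"
    define f where "f = (\<lambda>(\<theta>', z). Bset V A \<theta>' (z \<theta>'))"
    have cov: "P \<subseteq> \<Union>(f ` G0)"
    proof
      fix z assume z: "z \<in> P"
      then obtain \<theta>' where "\<theta>' \<in> V_congs V A" "Bset V A \<theta>' (z \<theta>') \<subseteq> P" using oP open_char[OF pv Ane] by blast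
      moreover have "z \<in> Bset V A \<theta>' (z \<theta>')" using z PO unfolding Bset_def by auto
      ultimately show "z \<in> \<Union>(f ` G0)" unfolding G0_def f_def using z by blast
    qed
    have opn: "\<forall>U\<in>f ` G0. openin (Omega_top V A) U" unfolding G0_def f_def using Bset_clopen(1) by auto
    obtain \<F> where F: "finite \<F>" "\<F> \<subseteq> f ` G0" "P \<subseteq> \<Union>\<F>"
      using kP cov opn unfolding compactin_def by metis
    obtain G where G: "G \<subseteq> G0" "finite G" "\<F> = f ` G" using finite_subset_image[OF F(1,2)] by blast
    define \<theta>s where "\<theta>s = \<theta> \<inter> \<Inter>(fst ` G)"
    have ts: "\<theta>s \<in> V_congs V A" unfolding \<theta>s_def
      by (rule Vcongs_Inter[OF pv _ _ t]) (use G in \<open>auto simp: G0_def\<close>)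
    have iotaP: "w \<in> conc K L \<longleftrightarrow> iota V A w \<in> P" if w: "w \<in> Aplus A" for w
    proof
      assume "w \<in> conc K L"
      then obtain u v where uv: "w = u @ v" "u \<in> K" "v \<in> L" unfolding conc_def by auto
      have uvA: "u \<in> Aplus A" "v \<in> Aplus A" using uv KA LA by auto
      have "iota V A u \<theta> \<subseteq> K" using iota_app[OF t] satK uv(2) unfolding \<theta>_def by auto
      then have "iota V A u \<in> OK" unfolding OK_def using iota_Omega[OF uvA(1)] by auto
      moreover have "iota V A v \<theta> \<subseteq> L" using iota_app[OF t] satL uv(3) unfolding \<theta>_def by auto
      then have "iota V A v \<in> OL" unfolding OL_def using iota_Omega[OF uvA(2)] by auto
      ultimately have "(\<lambda>(x, y). Omega_mult V A x y) (iota V A u, iota V A v) \<in> P" unfolding P_def by blast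
      then show "iota V A w \<in> P" using iota_mult[OF uvA] uv(1) by simp
    next
      assume "iota V A w \<in> P"
      then obtain x y where xy: "x \<in> OK" "y \<in> OL" "iota V A w = Omega_mult V A x y" unfolding P_def by auto
      have xO: "x \<in> Omega V A" and yO: "y \<in> Omega V A" using xy unfolding OK_def OL_def by auto
      obtain \<theta>w where tw: "\<theta>w \<in> V_congs V A" and sw: "\<forall>v. (w, v) \<in> \<theta>w \<longrightarrow> v = w"
        using sep_cong[OF pv N fin w] by blast
      define \<theta>' where "\<theta>' = \<theta> \<inter> \<theta>w"
      have t': "\<theta>' \<in> V_congs V A" unfolding \<theta>'_def by (rule Vcongs_Int[OF pv t tw])
      obtain u v where uv: "u \<in> x \<theta>'" "v \<in> y \<theta>'" using Omega_cls(2)[OF xO t'] Omega_cls(2)[OF yO t'] by blast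
      have "w \<in> iota V A w \<theta>'" by (rule iota_self[OF t' w])
      also have "iota V A w \<theta>' = \<theta>' `` {u @ v}" using xy(3) mult_app[OF xO yO t' uv] by simp
      finally have "(u @ v, w) \<in> \<theta>w" unfolding \<theta>'_def by auto
      then have "(w, u @ v) \<in> \<theta>w" using Vcongs_props(2)[OF tw] unfolding equiv_def sym_def by blast
      then have wuv: "w = u @ v" using sw by auto
      have "u \<in> x \<theta>" using Omega_mono[OF xO t' t] uv(1) unfolding \<theta>'_def by auto
      then have "u \<in> K" using xy(1) unfolding OK_def by auto
      moreover have "v \<in> y \<theta>" using Omega_mono[OF yO t' t] uv(2) unfolding \<theta>'_def by auto
      then have "v \<in> L" using xy(2) unfolding OL_def by auto
      ultimately show "w \<in> conc K L" using wuv unfolding conc_def by auto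
    qed
    have sat: "w' \<in> conc K L" if ww: "(w, w') \<in> \<theta>s" "w \<in> conc K L" for w w'
    proof -
      have wA: "w \<in> Aplus A" "w' \<in> Aplus A" using Vcongs_props(1)[OF ts] ww(1) by auto
      have "iota V A w \<in> P" using iotaP[OF wA(1)] ww(2) by simp
      then obtain g where g: "g \<in> G" "iota V A w \<in> f g" using F(3) G(3) by auto
      obtain \<theta>i z where gz: "g = (\<theta>i, z)" by (cases g) auto
      have ti: "\<theta>i \<in> V_congs V A" and zP: "Bset V A \<theta>i (z \<theta>i) \<subseteq> P" using g(1) G(1) gz unfolding G0_def by auto
      have "\<theta>s \<subseteq> \<theta>i" using g(1) gz unfolding \<theta>s_def by auto
      then have "(w, w') \<in> \<theta>i" using ww(1) by auto
      then have "\<theta>i `` {w} = \<theta>i `` {w'}" using Vcongs_props(2)[OF ti] by (simp add: equiv_class_eq)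
      then have "iota V A w' \<theta>i = iota V A w \<theta>i" using iota_app[OF ti] by simp
      also have "\<dots> = z \<theta>i" using g(2) gz unfolding f_def Bset_def by auto
      finally have "iota V A w' \<in> Bset V A \<theta>i (z \<theta>i)" unfolding Bset_def using iota_Omega[OF wA(2)] by auto
      then have "iota V A w' \<in> P" using zP by auto
      then show ?thesis using iotaP[OF wA(2)] by simp
    qed
    have "conc K L \<subseteq> Aplus A" by (rule conc_sub[OF KA LA])
    then show "recognizable V A (conc K L)" using rec_iff[OF pv Ane] ts sat by blast
  qed
qed



lemma mult_open_empty:
  assumes pv: "pseudovariety V" and A: "A = {}"
  shows "mult_open V A"
proof -
  have C: "V_congs V A = {}" using Vcongs_nonempty_A[OF pv] A by blast
  have O: "Omega V A = {\<lambda>_. {}}"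
  proof
    show "Omega V A \<subseteq> {\<lambda>_. {}}"
    proof
      fix x assume x: "x \<in> Omega V A"
      have "x \<theta> = {}" for \<theta> using Omega_nonC[OF x] C by blast
      then have "x = (\<lambda>_. {})" by (rule ext)
      then show "x \<in> {\<lambda>_. {}}" by simp
    qed
    show "{\<lambda>_. {}} \<subseteq> Omega V A" unfolding Omega_def using C by simp
  qed
  have M: "Omega_mult V A x y = (\<lambda>_. {})" for x y unfolding Omega_mult_def using C by simp
  show ?thesis unfolding mult_open_def
  proof (intro allI impI)
    fix U assume "openin (prod_topology (Omega_top V A) (Omega_top V A)) U"
    show "openin (Omega_top V A) ((\<lambda>(x, y). Omega_mult V A x y) ` U)"
    proof (cases "U = {}")
      case True then show ?thesis by simp
    next
      case False
      then have "(\<lambda>(x, y). Omega_mult V A x y) ` U = {\<lambda>_. {}}" using M by auto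
      also have "\<dots> = topspace (Omega_top V A)" using O topspace_Omega_top by metis
      finally show ?thesis by simp
    qed
  qed
qed

lemma dir23:

  assumes pv: "pseudovariety V" and Ane: "A \<noteq> {}" and cc: "conc_closed_on V A"
  shows "mult_open V A"
  unfolding mult_open_def
proof (intro allI impI)
  fix U assume oU: "openin (prod_topology (Omega_top V A) (Omega_top V A)) U"
  let ?m = "\<lambda>(x, y). Omega_mult V A x y"
  have Usub: "U \<subseteq> Omega V A \<times> Omega V A" using openin_subset[OF oU] by (simp add: topspace_Omega_top)
  have "?m ` U \<subseteq> Omega V A" using Usub mult_Omega by fastforce
  moreover have "\<exists>\<theta>'\<in>V_congs V A. Bset V A \<theta>' (z \<theta>') \<subseteq> ?m ` U" if z: "z \<in> ?m ` U" for z
  proof -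
    obtain x y where xy: "(x, y) \<in> U" "z = Omega_mult V A x y" using z by auto
    have xO: "x \<in> Omega V A" and yO: "y \<in> Omega V A" using xy Usub by auto
    obtain U1 U2 where U12: "openin (Omega_top V A) U1" "openin (Omega_top V A) U2" "x \<in> U1" "y \<in> U2" "U1 \<times> U2 \<subseteq> U"
    proof -
      have "\<forall>x y. (x, y) \<in> U \<longrightarrow> (\<exists>U1 U2. openin (Omega_top V A) U1 \<and> openin (Omega_top V A) U2 \<and> x \<in> U1 \<and> y \<in> U2 \<and> U1 \<times> U2 \<subseteq> U)"
        using oU by (simp only: openin_prod_topology_alt)
      then have "\<exists>U1 U2. openin (Omega_top V A) U1 \<and> openin (Omega_top V A) U2 \<and> x \<in> U1 \<and> y \<in> U2 \<and> U1 \<times> U2 \<subseteq> U"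
        using xy(1) by blast
      then show ?thesis using that by blast
    qed

    obtain \<theta>1 where t1: "\<theta>1 \<in> V_congs V A" "Bset V A \<theta>1 (x \<theta>1) \<subseteq> U1" using U12 open_char[OF pv Ane] by blast
    obtain \<theta>2 where t2: "\<theta>2 \<in> V_congs V A" "Bset V A \<theta>2 (y \<theta>2) \<subseteq> U2" using U12 open_char[OF pv Ane] by blast
    define \<theta> where "\<theta> = \<theta>1 \<inter> \<theta>2"
    have t: "\<theta> \<in> V_congs V A" unfolding \<theta>_def by (rule Vcongs_Int[OF pv t1(1) t2(1)])
    define K where "K = x \<theta>"
    define L where "L = y \<theta>"
    have clsat: "\<forall>u v. (u, v) \<in> \<theta> \<longrightarrow> u \<in> c \<theta> \<longrightarrow> v \<in> c \<theta>" if c: "c \<in> Omega V A" for c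
      using Omega_cls(4)[OF c t] by auto
    have rK: "recognizable V A K" unfolding K_def using rec_iff[OF pv Ane] t clsat[OF xO] Omega_cls(3)[OF xO t] by blast
    have rL: "recognizable V A L" unfolding L_def using rec_iff[OF pv Ane] t clsat[OF yO] Omega_cls(3)[OF yO t] by blast
    have "recognizable V A (conc K L)" using cc rK rL unfolding conc_closed_on_def by blast
    then obtain \<theta>3 where t3: "\<theta>3 \<in> V_congs V A" and sat3: "\<forall>u v. (u, v) \<in> \<theta>3 \<longrightarrow> u \<in> conc K L \<longrightarrow> v \<in> conc K L"
      using rec_iff[OF pv Ane] by blast
    define \<theta>' where "\<theta>' = \<theta> \<inter> \<theta>3"
    have t': "\<theta>' \<in> V_congs V A" unfolding \<theta>'_def by (rule Vcongs_Int[OF pv t t3])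
    have zO: "z \<in> Omega V A" using xy mult_Omega[OF xO yO] by simp
    let ?X = "prod_topology (Omega_top V A) (Omega_top V A)"
    have cB: "closedin ?X (Bset V A \<theta> K \<times> Bset V A \<theta> L)"
      unfolding closedin_prod_Times_iff using Bset_clopen(2)[OF t] by blast
    define Q where "Q = ?m ` (Bset V A \<theta> K \<times> Bset V A \<theta> L)"
    have kQ: "compactin (Omega_top V A) Q" unfolding Q_def
      by (rule image_compactin[OF closedin_compact_space[OF _ cB] mult_cont[OF pv Ane]])
         (rule compact_prod_Omega[OF pv])
    have clQ: "closedin (Omega_top V A) Q" by (rule compactin_imp_closedin[OF Omega_Hausdorff kQ])
    have "Bset V A \<theta>' (z \<theta>') \<subseteq> ?m ` U"
    proof
      fix z' assume z': "z' \<in> Bset V A \<theta>' (z \<theta>')"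
      have z'O: "z' \<in> Omega V A" and z'z: "z' \<theta>' = z \<theta>'" using z' unfolding Bset_def by auto
      have "z' \<in> Q"
      proof (rule ccontr)
        assume nQ: "z' \<notin> Q"
        have "openin (Omega_top V A) (Omega V A - Q)"
          using clQ unfolding closedin_def topspace_Omega_top by auto
        then obtain \<theta>'' where t'': "\<theta>'' \<in> V_congs V A" "Bset V A \<theta>'' (z' \<theta>'') \<subseteq> Omega V A - Q"
          using open_char[OF pv Ane] z'O nQ by blast
        define \<theta>4 where "\<theta>4 = \<theta>'' \<inter> \<theta>'"
        have t4: "\<theta>4 \<in> V_congs V A" unfolding \<theta>4_def by (rule Vcongs_Int[OF pv t''(1) t'])
        obtain s where s: "s \<in> z' \<theta>4" using Omega_cls(2)[OF z'O t4] by blast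
        have s'': "s \<in> z' \<theta>''" using Omega_mono[OF z'O t4 t''(1)] s unfolding \<theta>4_def by auto
        have s': "s \<in> z \<theta>'" using Omega_mono[OF z'O t4 t'] s z'z unfolding \<theta>4_def by auto
        obtain u v where uv: "u \<in> x \<theta>'" "v \<in> y \<theta>'" using Omega_cls(2)[OF xO t'] Omega_cls(2)[OF yO t'] by blast
        have "z \<theta>' = \<theta>' `` {u @ v}" using xy(2) mult_app[OF xO yO t' uv] by simp
        then have "(u @ v, s) \<in> \<theta>3" using s' unfolding \<theta>'_def by auto
        moreover have "u \<in> K" using Omega_mono[OF xO t' t] uv(1) unfolding K_def \<theta>'_def by auto
        moreover have "v \<in> L" using Omega_mono[OF yO t' t] uv(2) unfolding L_def \<theta>'_def by auto
        ultimately have "s \<in> conc K L" using sat3 unfolding conc_def by blast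
        then obtain u1 v1 where u1v1: "s = u1 @ v1" "u1 \<in> K" "v1 \<in> L" unfolding conc_def by auto
        have u1A: "u1 \<in> Aplus A" using u1v1(2) Omega_cls(3)[OF xO t] unfolding K_def by auto
        have v1A: "v1 \<in> Aplus A" using u1v1(3) Omega_cls(3)[OF yO t] unfolding L_def by auto
        have "iota V A u1 \<theta> = K" using iota_app[OF t] Omega_cls(4)[OF xO t] u1v1(2) unfolding K_def by simp
        then have "iota V A u1 \<in> Bset V A \<theta> K" unfolding Bset_def using iota_Omega[OF u1A] by auto
        moreover have "iota V A v1 \<theta> = L" using iota_app[OF t] Omega_cls(4)[OF yO t] u1v1(3) unfolding L_def by simp
        then have "iota V A v1 \<in> Bset V A \<theta> L" unfolding Bset_def using iota_Omega[OF v1A] by auto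
        ultimately have "(iota V A u1, iota V A v1) \<in> Bset V A \<theta> K \<times> Bset V A \<theta> L" by (rule SigmaI)
        then have "?m (iota V A u1, iota V A v1) \<in> Q" unfolding Q_def by (rule imageI)
        then have iQ: "iota V A s \<in> Q" using iota_mult[OF u1A v1A] u1v1(1) by simp
        have sA: "s \<in> Aplus A" using u1A v1A u1v1(1) Aplus_app by blast
        have "iota V A s \<theta>'' = z' \<theta>''" using iota_app[OF t''(1)] Omega_cls(4)[OF z'O t''(1) s''] by simp
        then have "iota V A s \<in> Bset V A \<theta>'' (z' \<theta>'')" unfolding Bset_def using iota_Omega[OF sA] by auto
        then show False using t''(2) iQ by auto
      qed
      then obtain x' y' where x'y': "x' \<in> Bset V A \<theta> K" "y' \<in> Bset V A \<theta> L" "z' = Omega_mult V A x' y'"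
        unfolding Q_def by auto
      have x'O: "x' \<in> Omega V A" and y'O: "y' \<in> Omega V A" using x'y' unfolding Bset_def by auto
      have sub1: "\<theta> \<subseteq> \<theta>1" and sub2: "\<theta> \<subseteq> \<theta>2" unfolding \<theta>_def by auto
      have "x' \<theta> = x \<theta>" using x'y'(1) unfolding Bset_def K_def by auto
      then have "x' \<theta>1 = x \<theta>1" by (rule Omega_agree[OF x'O xO t t1(1) sub1])
      then have "x' \<in> Bset V A \<theta>1 (x \<theta>1)" unfolding Bset_def using x'O by auto
      then have x'U: "x' \<in> U1" using t1(2) by (rule subsetD[rotated])
      have "y' \<theta> = y \<theta>" using x'y'(2) unfolding Bset_def L_def by auto
      then have "y' \<theta>2 = y \<theta>2" by (rule Omega_agree[OF y'O yO t t2(1) sub2])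
      then have "y' \<in> Bset V A \<theta>2 (y \<theta>2)" unfolding Bset_def using y'O by auto
      then have y'U: "y' \<in> U2" using t2(2) by (rule subsetD[rotated])
      have "(x', y') \<in> U" using U12(5) x'U y'U by (rule subsetD[OF _ SigmaI])
      then show "z' \<in> ?m ` U" by (rule image_eqI[rotated]) (simp add: x'y'(3))

    qed
    then show ?thesis by (rule bexI[OF _ t'])
  qed
  ultimately show "openin (Omega_top V A) (?m ` U)" by (subst open_char[OF pv Ane]) (intro conjI ballI)

qed


theorem mainTheorem3:
  fixes V :: "(nat set \<times> (nat \<Rightarrow> nat \<Rightarrow> nat)) set"
  assumes "pseudovariety V"
    and "infinite (UNIV :: 'a set)"
  shows "((\<forall>A::'a set. finite A \<longrightarrow> conc_closed_on V A) \<longleftrightarrow> (\<forall>A::'a set. conc_closed_on V A))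
       \<and> ((\<forall>A::'a set. conc_closed_on V A) \<longleftrightarrow> (contains_N V \<and> (\<forall>A::'a set. mult_open V A)))
       \<and> ((contains_N V \<and> (\<forall>A::'a set. mult_open V A)) \<longleftrightarrow>
            (contains_N V \<and> (\<forall>A::'a set. finite A \<longrightarrow> mult_open V A)))"
proof -
  note pv = assms(1)
  have i12: "\<forall>A::'a set. conc_closed_on V A" if h: "\<forall>A::'a set. finite A \<longrightarrow> conc_closed_on V A"
    using dir12[OF pv h] by blast
  have i23: "contains_N V \<and> (\<forall>A::'a set. mult_open V A)" if h: "\<forall>A::'a set. conc_closed_on V A"
  proof (intro conjI allI)
    have "\<forall>B::'a set. finite B \<longrightarrow> conc_closed_on V B" using h by blast
    then show "contains_N V" by (rule dirN[OF pv assms(2)])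
  next
    fix A :: "'a set"
    show "mult_open V A"
    proof (cases "A = {}")
      case True then show ?thesis by (rule mult_open_empty[OF pv])
    next
      case False then show ?thesis using dir23[OF pv False] h by blast
    qed
  qed
  have i41: "\<forall>A::'a set. finite A \<longrightarrow> conc_closed_on V A"
    if h: "contains_N V \<and> (\<forall>A::'a set. finite A \<longrightarrow> mult_open V A)"
    using dir41[OF pv] h by blast
  show ?thesis using i12 i23 i41 by blast
qed

end
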